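(* Let $P,Q,R$ be trigonometric polynomials on $\mathbb{R}^2$ (i.e. finite sums $\sum_k c_ke^{2\pi ik\cdot x}$, $k\in\mathbb{Z}^2$). Let $m:\mathbb{R}^2\times\mathbb{R}^2\to\mathbb{C}$ be continuous at every point of $\mathbb{Z}^2\times\mathbb{Z}^2$ and satisfy $m(\xi_1,\xi_2)=O(\exp|(\xi_1,\xi_2)|)$; let $\pi$ be the bilinear multiplier operator with symbol $m$ and $\tilde\pi$ its periodization. For $\delta>0$ let $w_\delta(y)=e^{-\pi\delta|y|^2}$, $y\in\mathbb{R}^2$. Then whenever $\alpha,\beta,\gamma>0$ with $\alpha+\beta+\gamma=1$, $$\lim_{\varepsilon\to0}\varepsilon\int_{\mathbb{R}^2}\pi(Pw_{\alpha\varepsilon},Qw_{\beta\varepsilon})(x)\overline{R(x)}\,w_{\gamma\varepsilon}(x)\,dx=\int_{[-1/2,1/2]^2}\tilde\pi(P,Q)(x)\overline{R(x)}\,dx.$$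
   Context: Fourier transform on $\mathbb{R}^2$: $\hat f(\xi)=\int_{\mathbb{R}^2}f(x)e^{-2\pi ix\cdot\xi}dx$. The bilinear multiplier operator with symbol $m$ is $\pi(f,g)(x)=\int_{\mathbb{R}^2}\int_{\mathbb{R}^2}m(\xi_1,\xi_2)\hat f(\xi_1)\hat g(\xi_2)e^{2\pi i(\xi_1+\xi_2)\cdot x}d\xi_1d\xi_2$. Its periodization acts on functions on $\mathbb{T}^2=\mathbb{R}^2/\mathbb{Z}^2$ by $\tilde\pi(f,g)(x)=\sum_{n_1,n_2\in\mathbb{Z}^2}m(n_1,n_2)\hat f(n_1)\hat g(n_2)e^{2\pi ix\cdot(n_1+n_2)}$, where $\hat f(n)=\int_{\mathbb{T}^2}f(x)e^{-2\pi in\cdot x}dx$. *)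

theory Defs
  imports "HOL-Analysis.Analysis"
begin

definition Zsq :: "(real^2) set" where
  "Zsq = {k. \<forall>i. k $ i \<in> \<int>}"

definition echar :: "real \<Rightarrow> complex" where
  "echar t = exp (complex_of_real (2 * pi * t) * \<i>)"

definition trig_poly :: "(real^2 \<Rightarrow> complex) \<Rightarrow> bool" where
  "trig_poly P \<longleftrightarrow> (\<exists>K c. finite K \<and> K \<subseteq> Zsq \<and>
       (\<forall>x. P x = (\<Sum>k\<in>K. c k * echar (k \<bullet> x))))"

definition fourierR :: "(real^2 \<Rightarrow> complex) \<Rightarrow> real^2 \<Rightarrow> complex" where
  "fourierR f \<xi> = (LINT x|lborel. f x * echar (- (x \<bullet> \<xi>)))"

definition bilin_mult ::
  "((real^2) \<times> (real^2) \<Rightarrow> complex) \<Rightarrow> (real^2 \<Rightarrow> complex) \<Rightarrow> (real^2 \<Rightarrow> complex)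
     \<Rightarrow> real^2 \<Rightarrow> complex" where
  "bilin_mult m f g x =
     (LINT \<xi>1|lborel. LINT \<xi>2|lborel.
        m (\<xi>1, \<xi>2) * fourierR f \<xi>1 * fourierR g \<xi>2 * echar ((\<xi>1 + \<xi>2) \<bullet> x))"

definition fourierT :: "(real^2 \<Rightarrow> complex) \<Rightarrow> real^2 \<Rightarrow> complex" where
  "fourierT f n = (LINT x:cbox 0 (vec 1)|lborel. f x * echar (- (n \<bullet> x)))"

definition periodization ::
  "((real^2) \<times> (real^2) \<Rightarrow> complex) \<Rightarrow> (real^2 \<Rightarrow> complex) \<Rightarrow> (real^2 \<Rightarrow> complex)
     \<Rightarrow> real^2 \<Rightarrow> complex" where
  "periodization m f g x =
     (\<Sum>\<^sub>\<infinity>(n1, n2)\<in>Zsq \<times> Zsq.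
        m (n1, n2) * fourierT f n1 * fourierT g n2 * echar ((n1 + n2) \<bullet> x))"

definition gw :: "real \<Rightarrow> real^2 \<Rightarrow> complex" where
  "gw \<delta> y = complex_of_real (exp (- pi * \<delta> * (norm y)\<^sup>2))"

end

theory Submission
  imports Defs "HOL-Probability.Probability"
begin
lemma echar_add: "echar (a + b) = echar a * echar b"
  unfolding echar_def by (simp add: distrib_left distrib_right exp_add[symmetric])

lemma echar_minus: "echar (- a) = cnj (echar a)"
  unfolding echar_def by (simp add: exp_cnj)

lemma norm_echar[simp]: "norm (echar a) = 1"
  unfolding echar_def by (simp add: norm_exp_i_times)

lemma echar_0[simp]: "echar 0 = 1"
  unfolding echar_def by simp

lemma continuous_echar[continuous_intros]: "continuous_on UNIV echar"
  unfolding echar_def by (intro continuous_intros)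

lemma measurable_echar[measurable]: "echar \<in> borel_measurable borel"
  by (intro borel_measurable_continuous_onI continuous_echar)

lemma echar_sum: "finite A \<Longrightarrow> echar (\<Sum>i\<in>A. f i) = (\<Prod>i\<in>A. echar (f i))"
  by (induction A rule: finite_induct) (auto simp: echar_add)

lemma gauss1:
  fixes \<delta> s :: real assumes d: "\<delta> > 0"
  shows "integrable lborel (\<lambda>t. complex_of_real (exp (- pi * \<delta> * t\<^sup>2)) * echar (- (t * s)))"
    and "(LINT t|lborel. complex_of_real (exp (- pi * \<delta> * t\<^sup>2)) * echar (- (t * s)))
          = complex_of_real (exp (- pi * s\<^sup>2 / \<delta>) / sqrt \<delta>)"
proof -
  define c where "c = 1 / sqrt (2 * pi * \<delta>)"
  define \<theta> where "\<theta> = - 2 * pi * c * s"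
  have c0: "c > 0" using d by (simp add: c_def)
  have cc: "c\<^sup>2 = 1 / (2 * pi * \<delta>)" using d by (simp add: c_def power_divide)
  let ?f = "\<lambda>t. complex_of_real (exp (- pi * \<delta> * t\<^sup>2)) * echar (- (t * s))"
  have fc: "?f (0 + c * x) = complex_of_real (sqrt (2*pi)) * (std_normal_density x *\<^sub>R iexp (\<theta> * x))" for x
  proof -
    have "- pi * \<delta> * (c * x)\<^sup>2 = - x\<^sup>2 / 2" using d cc by (simp add: power_mult_distrib field_simps)
    moreover have "echar (- (c * x * s)) = iexp (\<theta> * x)"
      unfolding echar_def \<theta>_def by (simp add: algebra_simps)
    ultimately show ?thesis
      by (simp add: std_normal_density_def scaleR_conv_of_real)
  qed
  have int0: "integrable lborel (\<lambda>x. std_normal_density x *\<^sub>R iexp (\<theta> * x))"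
  proof (rule Bochner_Integration.integrable_bound)
    show "integrable lborel std_normal_density" using integrable_std_normal_moment[of 0] by simp
    show "AE x in lborel. norm (std_normal_density x *\<^sub>R iexp (\<theta> * x)) \<le> norm (std_normal_density x)"
      by (simp add: norm_exp_i_times)
  qed simp
  have intc: "integrable lborel (\<lambda>x. ?f (0 + c * x))"
    unfolding fc by (intro integrable_mult_right int0)
  show int: "integrable lborel ?f"
    using lborel_integrable_real_affine_iff[of c ?f 0] intc c0 by simp
  have "(LINT t|lborel. ?f t) = c *\<^sub>R (LINT x|lborel. ?f (0 + c * x))"
    using lborel_integral_real_affine[of c ?f 0] c0 by simp
  also have "\<dots> = c *\<^sub>R (complex_of_real (sqrt (2*pi)) * (LINT x|lborel. std_normal_density x *\<^sub>R iexp (\<theta> * x)))"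
    unfolding fc by (simp only: integral_mult_right_zero)
  also have "\<dots> = c *\<^sub>R (complex_of_real (sqrt (2*pi)) * char std_normal_distribution \<theta>)"
    unfolding char_def
    by (subst integral_density) auto
  also have "\<dots> = complex_of_real (c * sqrt (2*pi) * exp (- \<theta>\<^sup>2 / 2))"
    by (simp add: char_std_normal_distribution scaleR_conv_of_real)
  also have "c * sqrt (2*pi) = 1 / sqrt \<delta>" using d
    by (simp add: c_def real_sqrt_mult)
  also have "- \<theta>\<^sup>2 / 2 = - pi * s\<^sup>2 / \<delta>"
  proof -
    have "\<theta>\<^sup>2 = 4 * pi\<^sup>2 * s\<^sup>2 * c\<^sup>2" by (simp add: \<theta>_def power2_eq_square)
    moreover have "c * c = 1 / (2 * pi * \<delta>)" using cc by (simp add: power2_eq_square)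
    ultimately show ?thesis using d pi_gt_zero by (simp add: field_simps power2_eq_square)
  qed
  finally show "(LINT t|lborel. ?f t) = complex_of_real (exp (- pi * s\<^sup>2 / \<delta>) / sqrt \<delta>)" by simp
qed

lemma prodB:
  fixes \<phi> :: "'a::euclidean_space \<Rightarrow> real \<Rightarrow> complex"
  assumes int: "\<And>b. b \<in> Basis \<Longrightarrow> integrable lborel (\<phi> b)"
  shows "integrable lborel (\<lambda>x::'a. \<Prod>b\<in>Basis. \<phi> b (x \<bullet> b))"
    and "(LINT x|lborel. (\<Prod>b\<in>Basis. \<phi> b (x \<bullet> b))) = (\<Prod>b\<in>Basis. LINT t|lborel. \<phi> b t)"
proof -
  interpret product_sigma_finite "\<lambda>_::'a. lborel :: real measure"
    by (simp add: product_sigma_finite_def sigma_finite_lborel)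
  let ?T = "\<lambda>f::'a \<Rightarrow> real. \<Sum>b\<in>Basis. f b *\<^sub>R b"
  have Tm: "?T \<in> measurable (\<Pi>\<^sub>M b\<in>Basis. lborel) borel" by measurable
  have Tb: "?T f \<bullet> b = f b" if "b \<in> Basis" for f b
    using that by (simp add: inner_sum_left inner_Basis if_distrib cong: if_cong)
  have meas: "(\<lambda>x::'a. \<Prod>b\<in>Basis. \<phi> b (x \<bullet> b)) \<in> borel_measurable borel"
    using int by (intro borel_measurable_prod) (auto dest: borel_measurable_integrable)
  have eq: "(\<lambda>f. \<Prod>b\<in>Basis. \<phi> b (?T f \<bullet> b)) = (\<lambda>f. \<Prod>b\<in>Basis. \<phi> b (f b))"
    by (intro ext prod.cong) (simp_all add: Tb)
  have pi: "integrable (\<Pi>\<^sub>M b\<in>Basis. lborel) (\<lambda>f. \<Prod>b\<in>Basis. \<phi> b (f b))"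
    using int by (intro product_integrable_prod) auto
  show "integrable lborel (\<lambda>x::'a. \<Prod>b\<in>Basis. \<phi> b (x \<bullet> b))"
    apply (subst lborel_eq)
    apply (subst integrable_distr_eq[OF Tm])
    using meas apply simp
    using pi eq by simp
  show "(LINT x|lborel. (\<Prod>b\<in>Basis. \<phi> b (x \<bullet> b))) = (\<Prod>b\<in>Basis. LINT t|lborel. \<phi> b t)"
    apply (subst lborel_eq)
    apply (subst integral_distr[OF Tm])
    using meas apply simp
    using eq product_integral_prod[of Basis \<phi>] int by simp
qed

lemma nsq: "(norm (x::'a::euclidean_space))\<^sup>2 = (\<Sum>b\<in>Basis. (x \<bullet> b)\<^sup>2)"
  by (subst power2_norm_eq_inner, subst euclidean_inner) (simp add: power2_eq_square)

lemma gauss_split: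
  fixes x \<eta> :: "'a::euclidean_space"
  shows "complex_of_real (exp (- pi * \<delta> * (norm x)\<^sup>2)) * echar (- (x \<bullet> \<eta>))
       = (\<Prod>b\<in>Basis. complex_of_real (exp (- pi * \<delta> * (x \<bullet> b)\<^sup>2)) * echar (- ((x \<bullet> b) * (\<eta> \<bullet> b))))"
proof -
  note n = nsq[of x]
  have i: "- (x \<bullet> \<eta>) = (\<Sum>b\<in>Basis. - ((x \<bullet> b) * (\<eta> \<bullet> b)))"
    by (simp add: euclidean_inner[of x \<eta>] sum_negf)
  have "- pi * \<delta> * (norm x)\<^sup>2 = (\<Sum>b\<in>Basis. - pi * \<delta> * (x \<bullet> b)\<^sup>2)"
    by (simp add: n sum_distrib_left)
  then show ?thesis
    by (simp add: i echar_sum exp_sum prod.distrib)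
qed

lemma gaussFT:
  fixes \<eta> :: "'a::euclidean_space" assumes d: "\<delta> > 0"
  shows "integrable lborel (\<lambda>x::'a. complex_of_real (exp (- pi * \<delta> * (norm x)\<^sup>2)) * echar (- (x \<bullet> \<eta>)))"
    and "(LINT x|lborel. complex_of_real (exp (- pi * \<delta> * (norm x)\<^sup>2)) * echar (- (x \<bullet> \<eta>)))
          = complex_of_real (exp (- pi * (norm \<eta>)\<^sup>2 / \<delta>) / sqrt \<delta> ^ DIM('a))"
proof -
  let ?\<phi> = "\<lambda>b t. complex_of_real (exp (- pi * \<delta> * t\<^sup>2)) * echar (- (t * (\<eta> \<bullet> b)))"
  have int: "\<And>b. b \<in> Basis \<Longrightarrow> integrable lborel (?\<phi> b)" using gauss1(1)[OF d] by blast
  show "integrable lborel (\<lambda>x::'a. complex_of_real (exp (- pi * \<delta> * (norm x)\<^sup>2)) * echar (- (x \<bullet> \<eta>)))"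
    unfolding gauss_split using prodB(1)[of ?\<phi>, OF int] by simp
  have "(LINT x|lborel. complex_of_real (exp (- pi * \<delta> * (norm x)\<^sup>2)) * echar (- (x \<bullet> \<eta>)))
      = (\<Prod>b\<in>Basis. LINT t|lborel. ?\<phi> b t)"
    unfolding gauss_split using prodB(2)[of ?\<phi>, OF int] by simp
  also have "\<dots> = (\<Prod>b\<in>Basis. complex_of_real (exp (- pi * (\<eta> \<bullet> b)\<^sup>2 / \<delta>) / sqrt \<delta>))"
    using gauss1(2)[OF d] by simp
  also have "\<dots> = complex_of_real (exp (- pi * (norm \<eta>)\<^sup>2 / \<delta>) / sqrt \<delta> ^ DIM('a))"
  proof -
    have "- pi * (norm \<eta>)\<^sup>2 / \<delta> = (\<Sum>b\<in>Basis. - pi * (\<eta> \<bullet> b)\<^sup>2 / \<delta>)"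
      by (simp add: nsq[of \<eta>] sum_distrib_left sum_divide_distrib)
    then show ?thesis
      by (simp add: exp_sum prod_dividef)
  qed
  finally show "(LINT x|lborel. complex_of_real (exp (- pi * \<delta> * (norm x)\<^sup>2)) * echar (- (x \<bullet> \<eta>)))
          = complex_of_real (exp (- pi * (norm \<eta>)\<^sup>2 / \<delta>) / sqrt \<delta> ^ DIM('a))" .
qed

definition ker :: "real \<Rightarrow> real^2 \<Rightarrow> real" where
  "ker \<delta> v = exp (- pi * (norm v)\<^sup>2 / \<delta>) / \<delta>"

lemma ker_nonneg: "\<delta> > 0 \<Longrightarrow> ker \<delta> v \<ge> 0"
  by (simp add: ker_def)

lemma ker_le: "\<delta> > 0 \<Longrightarrow> ker \<delta> v \<le> 1 / \<delta>"
  by (simp add: ker_def divide_right_mono)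

lemma ker_minus[simp]: "ker \<delta> (- v) = ker \<delta> v"
  by (simp add: ker_def)

lemma continuous_ker: "continuous_on UNIV (ker \<delta>)"
proof -
  have "ker \<delta> = (\<lambda>v. exp (- pi * (norm v)\<^sup>2 * inverse \<delta>) * inverse \<delta>)"
    by (simp add: ker_def divide_inverse fun_eq_iff)
  then show ?thesis by (auto intro!: continuous_intros)
qed

lemma measurable_ker[measurable]: "ker \<delta> \<in> borel_measurable borel"
  by (intro borel_measurable_continuous_onI continuous_ker)

lemma FT2:
  fixes \<eta> :: "real^2" assumes d: "\<delta> > 0"
  shows "integrable lborel (\<lambda>x. gw \<delta> x * echar (- (x \<bullet> \<eta>)))"
    and "(LINT x|lborel. gw \<delta> x * echar (- (x \<bullet> \<eta>))) = complex_of_real (ker \<delta> \<eta>)"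
  using gaussFT[OF d, of \<eta>] d unfolding gw_def ker_def by (auto simp: power2_eq_square)

lemma FT2':
  fixes \<eta> :: "real^2" assumes d: "\<delta> > 0"
  shows "integrable lborel (\<lambda>x. echar (\<eta> \<bullet> x) * gw \<delta> x)"
    and "(LINT x|lborel. echar (\<eta> \<bullet> x) * gw \<delta> x) = complex_of_real (ker \<delta> \<eta>)"
proof -
  have e: "echar (\<eta> \<bullet> x) * gw \<delta> x = gw \<delta> x * echar (- (x \<bullet> (- \<eta>)))" for x
    by (simp add: inner_commute)
  show "integrable lborel (\<lambda>x. echar (\<eta> \<bullet> x) * gw \<delta> x)"
    unfolding e using FT2(1)[OF d] .
  show "(LINT x|lborel. echar (\<eta> \<bullet> x) * gw \<delta> x) = complex_of_real (ker \<delta> \<eta>)"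
    unfolding e using FT2(2)[OF d, of "-\<eta>"] by simp
qed

lemma gw_integrable: "\<delta> > 0 \<Longrightarrow> integrable lborel (gw \<delta>)"
  using FT2(1)[of \<delta> 0] by simp

lemma ker_gw: "\<delta> > 0 \<Longrightarrow> complex_of_real (ker \<delta> v) = complex_of_real (1/\<delta>) * gw (1/\<delta>) v"
  by (simp add: ker_def gw_def)

lemma ker_integrable: "\<delta> > 0 \<Longrightarrow> integrable lborel (ker \<delta>)"
proof -
  assume d: "\<delta> > 0"
  have "integrable lborel (\<lambda>v. complex_of_real (ker \<delta> v))"
    unfolding ker_gw[OF d] using gw_integrable[of "1/\<delta>"] d by simp
  then show ?thesis using complex_of_real_integrable_eq by blast
qed

lemma ker_FT:
  fixes x :: "real^2" assumes d: "\<delta> > 0"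
  shows "integrable lborel (\<lambda>u. complex_of_real (ker \<delta> u) * echar (u \<bullet> x))"
    and "(LINT u|lborel. complex_of_real (ker \<delta> u) * echar (u \<bullet> x)) = gw \<delta> x"
proof -
  have e: "complex_of_real (ker \<delta> u) * echar (u \<bullet> x) = complex_of_real (1/\<delta>) * (gw (1/\<delta>) u * echar (- (u \<bullet> (-x))))" for u
    using d by (simp add: ker_gw)
  show "integrable lborel (\<lambda>u. complex_of_real (ker \<delta> u) * echar (u \<bullet> x))"
    unfolding e using FT2(1)[of "1/\<delta>" "-x"] d by simp
  have "(LINT u|lborel. complex_of_real (ker \<delta> u) * echar (u \<bullet> x)) = complex_of_real (1/\<delta>) * complex_of_real (ker (1/\<delta>) (-x))"
    unfolding e using FT2(2)[of "1/\<delta>" "-x"] d by simp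
  also have "\<dots> = gw \<delta> x" using d by (simp add: ker_def gw_def)
  finally show "(LINT u|lborel. complex_of_real (ker \<delta> u) * echar (u \<bullet> x)) = gw \<delta> x" .
qed

lemma gw_mult: "gw a x * gw b x = gw (a + b) x"
  unfolding gw_def of_real_mult[symmetric] exp_add[symmetric] by (simp add: algebra_simps)

lemma gw_1_integral: "(LINT x|lborel. gw 1 x) = 1"
  using FT2(2)[of 1 0] by (simp add: ker_def)

lemma affine_integral:
  fixes f :: "'a::euclidean_space \<Rightarrow> 'b::{banach, second_countable_topology}" and c :: real
  assumes c: "c \<noteq> 0"
  shows "integrable lborel (\<lambda>x. f (t + c *\<^sub>R x)) \<longleftrightarrow> integrable lborel f"
    and "(LINT x|lborel. f x) = (\<bar>c\<bar> ^ DIM('a)) *\<^sub>R (LINT x|lborel. f (t + c *\<^sub>R x))"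
proof -
  have T[measurable]: "(\<lambda>x::'a. t + c *\<^sub>R x) \<in> borel_measurable borel" by simp
  have L: "lborel = density (distr lborel borel (\<lambda>x::'a. t + c *\<^sub>R x)) (\<lambda>_. ennreal (\<bar>c\<bar> ^ DIM('a)))"
    using lborel_affine[OF c, of t] by simp
  show I: "integrable lborel (\<lambda>x. f (t + c *\<^sub>R x)) \<longleftrightarrow> integrable lborel f"
  proof
    assume i: "integrable lborel (\<lambda>x. f (t + c *\<^sub>R x))"
    then have fm: "f \<in> borel_measurable borel"
    proof -
      have "(\<lambda>x. f (t + c *\<^sub>R x)) \<in> borel_measurable borel" using i borel_measurable_integrable by simp
      then have "(\<lambda>y. f (t + c *\<^sub>R ((1/c) *\<^sub>R (y - t)))) \<in> borel_measurable borel"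
        by (rule measurable_compose[rotated]) simp
      then show ?thesis using c by simp
    qed
    show "integrable lborel f"
      apply (subst L)
      apply (subst integrable_density)
      using fm apply simp_all
      apply (subst integrable_distr_eq)
      using fm i by auto
  next
    assume i[measurable]: "integrable lborel f"
    then have fm[measurable]: "f \<in> borel_measurable borel" using borel_measurable_integrable by simp
    have "integrable (density (distr lborel borel (\<lambda>x::'a. t + c *\<^sub>R x)) (\<lambda>_. ennreal (\<bar>c\<bar> ^ DIM('a)))) f"
      using i L by simp
    then have "integrable (distr lborel borel (\<lambda>x::'a. t + c *\<^sub>R x)) (\<lambda>x. \<bar>c\<bar> ^ DIM('a) *\<^sub>R f x)"
      by (subst (asm) integrable_density) auto
    then have ii: "integrable lborel (\<lambda>x. \<bar>c\<bar> ^ DIM('a) *\<^sub>R f (t + c *\<^sub>R x))"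
      by (subst (asm) integrable_distr_eq) auto
    have "integrable lborel (\<lambda>x. (1 / \<bar>c\<bar> ^ DIM('a)) *\<^sub>R (\<bar>c\<bar> ^ DIM('a) *\<^sub>R f (t + c *\<^sub>R x)))"
      using integrable_scaleR_right[OF ii] .
    moreover have "(\<lambda>x. (1 / \<bar>c\<bar> ^ DIM('a)) *\<^sub>R (\<bar>c\<bar> ^ DIM('a) *\<^sub>R f (t + c *\<^sub>R x))) = (\<lambda>x. f (t + c *\<^sub>R x))"
      using c by (simp add: fun_eq_iff)
    ultimately show "integrable lborel (\<lambda>x. f (t + c *\<^sub>R x))" by simp
  qed
  show "(LINT x|lborel. f x) = (\<bar>c\<bar> ^ DIM('a)) *\<^sub>R (LINT x|lborel. f (t + c *\<^sub>R x))"
  proof cases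
    assume i: "integrable lborel f"
    then have fm[measurable]: "f \<in> borel_measurable borel" using borel_measurable_integrable by simp
    have "(LINT x|lborel. f x) = (LINT x|density (distr lborel borel (\<lambda>x::'a. t + c *\<^sub>R x)) (\<lambda>_. ennreal (\<bar>c\<bar> ^ DIM('a))). f x)"
      using L by simp
    also have "\<dots> = (LINT x|distr lborel borel (\<lambda>x::'a. t + c *\<^sub>R x). \<bar>c\<bar> ^ DIM('a) *\<^sub>R f x)"
      by (subst integral_density) auto
    also have "\<dots> = (LINT x|lborel. \<bar>c\<bar> ^ DIM('a) *\<^sub>R f (t + c *\<^sub>R x))"
      by (subst integral_distr) auto
    finally show ?thesis by simp
  next
    assume "\<not> integrable lborel f"
    then show ?thesis using I by (simp add: not_integrable_integral_eq)
  qed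
qed

lemma transl_integrable:
  fixes f :: "'a::euclidean_space \<Rightarrow> 'b::{banach, second_countable_topology}"
  shows "integrable lborel f \<Longrightarrow> integrable lborel (\<lambda>x. f (x - k))"
  using affine_integral(1)[of 1 f "-k"] by simp

lemma (in pair_sigma_finite) intprod:
  fixes f :: "'a \<Rightarrow> real" and g :: "'b \<Rightarrow> real"
  assumes f: "integrable M1 f" and g: "integrable M2 g"
  shows "integrable (M1 \<Otimes>\<^sub>M M2) (\<lambda>p. f (fst p) * g (snd p))"
proof (rule Fubini_integrable)
  have [measurable]: "f \<in> borel_measurable M1" "g \<in> borel_measurable M2"
    using f g by auto
  show "(\<lambda>p. f (fst p) * g (snd p)) \<in> borel_measurable (M1 \<Otimes>\<^sub>M M2)" by measurable
  have "(\<lambda>x. LINT y|M2. norm (f (fst (x, y)) * g (snd (x, y)))) = (\<lambda>x. \<bar>f x\<bar> * (LINT y|M2. \<bar>g y\<bar>))"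
    by (simp add: abs_mult)
  then show "integrable M1 (\<lambda>x. LINT y|M2. norm (f (fst (x, y)) * g (snd (x, y))))"
    using f by simp
  show "AE x in M1. integrable M2 (\<lambda>y. f (fst (x, y)) * g (snd (x, y)))"
    using g by simp
qed

lemma quad_bound: "a > 0 \<Longrightarrow> r - a * r\<^sup>2 \<le> 1 / (4 * a)" for a r :: real
proof -
  assume a: "a > 0"
  have "0 \<le> (2*a*r - 1)\<^sup>2" by simp
  then have "0 \<le> 4*a*a*r*r - 4*a*r + 1" by (simp add: power2_eq_square algebra_simps)
  then have "4*a*(r - a*r*r) \<le> 1" by (simp add: algebra_simps)
  then show ?thesis using a by (simp add: field_simps power2_eq_square)
qed

lemma expker_bound:
  fixes \<xi> k :: "real^2" assumes d: "\<delta> > 0"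
  shows "exp (norm \<xi>) * ker \<delta> (\<xi> - k) \<le> (2 * exp (norm k + \<delta> / (2*pi))) * ker (2*\<delta>) (\<xi> - k)"
proof -
  define r where "r = norm (\<xi> - k)"
  have "norm \<xi> \<le> norm k + r" unfolding r_def using norm_triangle_ineq[of k "\<xi> - k"] by simp
  then have e1: "exp (norm \<xi>) \<le> exp (norm k) * exp r" by (simp add: exp_add[symmetric])
  have q: "r - (pi/(2*\<delta>)) * r\<^sup>2 \<le> \<delta> / (2*pi)"
    using quad_bound[of "pi/(2*\<delta>)" r] d by simp
  have "exp r * exp (- pi * r\<^sup>2 / \<delta>) = exp (r - (pi/(2*\<delta>)) * r\<^sup>2) * exp (- pi * r\<^sup>2 / (2*\<delta>))"
    by (simp add: exp_add[symmetric] field_simps)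
  also have "\<dots> \<le> exp (\<delta> / (2*pi)) * exp (- pi * r\<^sup>2 / (2*\<delta>))"
    using q by (intro mult_right_mono) auto
  finally have e2: "exp r * exp (- pi * r\<^sup>2 / \<delta>) \<le> exp (\<delta> / (2*pi)) * exp (- pi * r\<^sup>2 / (2*\<delta>))" .
  have "exp (norm \<xi>) * ker \<delta> (\<xi> - k) \<le> exp (norm k) * exp r * (exp (- pi * r\<^sup>2 / \<delta>) / \<delta>)"
    unfolding ker_def r_def[symmetric] using e1 d by (intro mult_right_mono) auto
  also have "\<dots> = exp (norm k) * (exp r * exp (- pi * r\<^sup>2 / \<delta>)) / \<delta>" by simp
  also have "\<dots> \<le> exp (norm k) * (exp (\<delta> / (2*pi)) * exp (- pi * r\<^sup>2 / (2*\<delta>))) / \<delta>"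
    using e2 d by (intro divide_right_mono mult_left_mono) auto
  also have "\<dots> = (2 * exp (norm k + \<delta> / (2*pi))) * ker (2*\<delta>) (\<xi> - k)"
    unfolding ker_def r_def[symmetric] exp_add[of "norm k"] using d by (simp add: field_simps)
  finally show ?thesis .
qed

lemma expker_integrable:
  fixes k :: "real^2" assumes d: "\<delta> > 0"
  shows "integrable lborel (\<lambda>\<xi>. exp (norm \<xi>) * ker \<delta> (\<xi> - k))"
proof (rule Bochner_Integration.integrable_bound)
  show "integrable lborel (\<lambda>\<xi>. (2 * exp (norm k + \<delta> / (2*pi))) * ker (2*\<delta>) (\<xi> - k))"
    using transl_integrable[OF ker_integrable[of "2*\<delta>"], of k] d by simp
  show "AE \<xi> in lborel. norm (exp (norm \<xi>) * ker \<delta> (\<xi> - k)) \<le> norm ((2 * exp (norm k + \<delta> / (2*pi))) * ker (2*\<delta>) (\<xi> - k))"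
    using expker_bound[OF d] d ker_nonneg[of \<delta>] ker_nonneg[of "2*\<delta>"] by (auto simp: abs_mult)
qed simp

lemma FUB:
  fixes H :: "real^2 \<Rightarrow> real^2 \<Rightarrow> complex" and A B :: "real^2 \<Rightarrow> real" and h :: "real^2 \<Rightarrow> complex"
  assumes Hm: "(\<lambda>\<xi>::((real^2)\<times>(real^2)). H (fst \<xi>) (snd \<xi>)) \<in> borel_measurable borel"
    and Hb: "\<And>a b. norm (H a b) \<le> A a * B b"
    and iA: "integrable lborel A" and iB: "integrable lborel B"
    and ih: "integrable lborel h"
  shows "integrable lborel (\<lambda>\<xi>::((real^2)\<times>(real^2)). H (fst \<xi>) (snd \<xi>) * (LINT x|lborel. echar ((fst \<xi> + snd \<xi>) \<bullet> x) * h x))"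
    and "(LINT x|lborel. (LINT \<xi>1|lborel. LINT \<xi>2|lborel. H \<xi>1 \<xi>2 * echar ((\<xi>1 + \<xi>2) \<bullet> x)) * h x)
        = (LINT \<xi>|lborel. H (fst \<xi>) (snd \<xi>) * (LINT x|lborel. echar ((fst \<xi> + snd \<xi>) \<bullet> x) * h x))"
proof -
  have hm: "h \<in> borel_measurable borel" using ih by auto
  have Am: "A \<in> borel_measurable borel" "B \<in> borel_measurable borel" using iA iB by auto
  have AB: "integrable (lborel :: ((real^2)\<times>(real^2)) measure) (\<lambda>p. A (fst p) * B (snd p))"
    using lborel_pair.intprod[OF iA iB] by (simp add: lborel_prod)
  define \<Psi> where "\<Psi> = (\<lambda>p::((real^2) \<times> ((real^2)\<times>(real^2))). H (fst (snd p)) (snd (snd p)) * (echar ((fst (snd p) + snd (snd p)) \<bullet> fst p) * h (fst p)))"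
  have m1: "(\<lambda>p::((real^2) \<times> ((real^2)\<times>(real^2))). H (fst (snd p)) (snd (snd p))) \<in> borel_measurable borel"
    using measurable_compose[OF borel_measurable_continuous_onI[OF continuous_on_snd[OF continuous_on_id]] Hm] by simp
  have m2: "(\<lambda>p::((real^2) \<times> ((real^2)\<times>(real^2))). echar ((fst (snd p) + snd (snd p)) \<bullet> fst p)) \<in> borel_measurable borel"
    by (intro borel_measurable_continuous_onI continuous_on_compose2[OF continuous_echar] continuous_intros) auto
  have m3: "(\<lambda>p::((real^2) \<times> ((real^2)\<times>(real^2))). h (fst p)) \<in> borel_measurable borel"
    using measurable_compose[OF borel_measurable_continuous_onI[OF continuous_on_fst[OF continuous_on_id]] hm] by simp
  have \<Psi>m: "\<Psi> \<in> borel_measurable borel"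
    unfolding \<Psi>_def by (intro borel_measurable_times m1 m2 m3)
  have int\<Psi>: "integrable (lborel \<Otimes>\<^sub>M lborel) \<Psi>"
  proof (rule Bochner_Integration.integrable_bound)
    show "integrable (lborel \<Otimes>\<^sub>M lborel) (\<lambda>p::((real^2) \<times> ((real^2)\<times>(real^2))). norm (h (fst p)) * (A (fst (snd p)) * B (snd (snd p))))"
      using lborel_pair.intprod[of "\<lambda>x. norm (h x)" "\<lambda>p. A (fst p) * B (snd p)", OF _ AB] ih by simp
    show "\<Psi> \<in> borel_measurable (lborel \<Otimes>\<^sub>M lborel)" using \<Psi>m by (simp add: lborel_prod)
    show "AE p in lborel \<Otimes>\<^sub>M lborel. norm (\<Psi> p) \<le> norm (norm (h (fst p)) * (A (fst (snd p)) * B (snd (snd p))))"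
    proof (rule AE_I2)
      fix p :: "(real^2) \<times> ((real^2)\<times>(real^2))"
      have "norm (\<Psi> p) = norm (H (fst (snd p)) (snd (snd p))) * norm (h (fst p))"
        unfolding \<Psi>_def by (simp add: norm_mult)
      also have "\<dots> \<le> (A (fst (snd p)) * B (snd (snd p))) * norm (h (fst p))"
        by (intro mult_right_mono Hb) auto
      also have "\<dots> \<le> norm (norm (h (fst p)) * (A (fst (snd p)) * B (snd (snd p))))"
        using mult_left_mono[OF abs_ge_self[of "A (fst (snd p)) * B (snd (snd p))"] norm_ge_zero[of "h (fst p)"]]
        by (simp add: abs_mult mult.commute)
      finally show "norm (\<Psi> p) \<le> norm (norm (h (fst p)) * (A (fst (snd p)) * B (snd (snd p))))" .
    qed
  qed
  have F: "(LINT \<xi>|lborel. LINT x|lborel. \<Psi> (x, \<xi>)) = (LINT x|lborel. LINT \<xi>|lborel. \<Psi> (x, \<xi>))"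
    using lborel_pair.Fubini_integral[of "\<lambda>x \<xi>. \<Psi> (x, \<xi>)"] int\<Psi> by simp
  have intsw: "integrable (lborel \<Otimes>\<^sub>M lborel) (\<lambda>(\<xi>, x). \<Psi> (x, \<xi>))"
    using lborel_pair.integrable_product_swap[OF int\<Psi>] by simp
  have "integrable lborel (\<lambda>\<xi>. LINT x|lborel. \<Psi> (x, \<xi>))"
    using lborel_pair.integrable_fst'[OF intsw] by simp
  moreover have inner1: "(LINT x|lborel. \<Psi> (x, \<xi>)) = H (fst \<xi>) (snd \<xi>) * (LINT x|lborel. echar ((fst \<xi> + snd \<xi>) \<bullet> x) * h x)" for \<xi>
    unfolding \<Psi>_def by simp
  ultimately show "integrable lborel (\<lambda>\<xi>::((real^2)\<times>(real^2)). H (fst \<xi>) (snd \<xi>) * (LINT x|lborel. echar ((fst \<xi> + snd \<xi>) \<bullet> x) * h x))"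
    by simp
  have inner2: "(LINT \<xi>|lborel. \<Psi> (x, \<xi>)) = (LINT \<xi>1|lborel. LINT \<xi>2|lborel. H \<xi>1 \<xi>2 * echar ((\<xi>1 + \<xi>2) \<bullet> x)) * h x" for x
  proof -
    have "(LINT \<xi>|lborel. \<Psi> (x, \<xi>)) = (LINT \<xi>|lborel. H (fst \<xi>) (snd \<xi>) * echar ((fst \<xi> + snd \<xi>) \<bullet> x)) * h x"
      unfolding \<Psi>_def by (simp add: mult.assoc[symmetric] integral_mult_left_zero)
    also have "(LINT \<xi>|(lborel::((real^2)\<times>(real^2)) measure). H (fst \<xi>) (snd \<xi>) * echar ((fst \<xi> + snd \<xi>) \<bullet> x))
        = (LINT \<xi>1|lborel. LINT \<xi>2|lborel. H \<xi>1 \<xi>2 * echar ((\<xi>1 + \<xi>2) \<bullet> x))"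
    proof -
      have i: "integrable (lborel \<Otimes>\<^sub>M lborel) (\<lambda>\<xi>::((real^2)\<times>(real^2)). H (fst \<xi>) (snd \<xi>) * echar ((fst \<xi> + snd \<xi>) \<bullet> x))"
      proof (rule Bochner_Integration.integrable_bound)
        show "integrable (lborel \<Otimes>\<^sub>M lborel) (\<lambda>p::((real^2)\<times>(real^2)). A (fst p) * B (snd p))"
          using AB by (simp add: lborel_prod)
        have "(\<lambda>\<xi>::((real^2)\<times>(real^2)). H (fst \<xi>) (snd \<xi>) * echar ((fst \<xi> + snd \<xi>) \<bullet> x)) \<in> borel_measurable borel"
          by (intro borel_measurable_times Hm borel_measurable_continuous_onI
              continuous_on_compose2[OF continuous_echar] continuous_intros) auto
        then show "(\<lambda>\<xi>::((real^2)\<times>(real^2)). H (fst \<xi>) (snd \<xi>) * echar ((fst \<xi> + snd \<xi>) \<bullet> x)) \<in> borel_measurable (lborel \<Otimes>\<^sub>M lborel)"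
          by (simp add: lborel_prod)
        show "AE p in lborel \<Otimes>\<^sub>M lborel. norm (H (fst p) (snd p) * echar ((fst p + snd p) \<bullet> x)) \<le> norm (A (fst p) * B (snd p))"
          using Hb by (intro AE_I2) (auto simp: norm_mult intro: order_trans[OF _ abs_ge_self])
      qed
      show ?thesis
        using lborel_pair.integral_fst'[OF i] by (simp add: lborel_prod)
    qed
    finally show ?thesis .
  qed
  show "(LINT x|lborel. (LINT \<xi>1|lborel. LINT \<xi>2|lborel. H \<xi>1 \<xi>2 * echar ((\<xi>1 + \<xi>2) \<bullet> x)) * h x)
        = (LINT \<xi>|lborel. H (fst \<xi>) (snd \<xi>) * (LINT x|lborel. echar ((fst \<xi> + snd \<xi>) \<bullet> x) * h x))"
    using F unfolding inner1 inner2 by simp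
qed

lemma GID:
  assumes a: "\<alpha> > 0" and b: "\<beta> > 0" and g: "\<gamma> > 0" and s: "\<alpha> + \<beta> + \<gamma> = 1"
  shows "(LINT u|(lborel::((real^2)\<times>(real^2)) measure). ker \<alpha> (fst u) * ker \<beta> (snd u) * ker \<gamma> (fst u + snd u)) = 1"
proof -
  let ?H = "\<lambda>u1 u2. complex_of_real (ker \<alpha> u1 * ker \<beta> u2)"
  have Hm: "(\<lambda>\<xi>::((real^2)\<times>(real^2)). ?H (fst \<xi>) (snd \<xi>)) \<in> borel_measurable borel"
    by (intro borel_measurable_continuous_onI continuous_intros continuous_on_compose2[OF continuous_ker]) auto
  have Hb: "norm (?H u1 u2) \<le> ker \<alpha> u1 * ker \<beta> u2" for u1 u2
    using ker_nonneg[OF a, of u1] ker_nonneg[OF b, of u2] by (simp add: norm_mult)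
  note F = FUB[of ?H "ker \<alpha>" "ker \<beta>" "gw \<gamma>", OF Hm Hb ker_integrable[OF a] ker_integrable[OF b] gw_integrable[OF g]]
  have inner: "(LINT u1|lborel. LINT u2|lborel. ?H u1 u2 * echar ((u1 + u2) \<bullet> x)) = gw \<alpha> x * gw \<beta> x" for x
  proof -
    have e: "?H u1 u2 * echar ((u1 + u2) \<bullet> x) = (complex_of_real (ker \<alpha> u1) * echar (u1 \<bullet> x)) * (complex_of_real (ker \<beta> u2) * echar (u2 \<bullet> x))" for u1 u2
      by (simp add: inner_add_left echar_add)
    show ?thesis
      unfolding e integral_mult_right_zero integral_mult_left_zero ker_FT(2)[OF a] ker_FT(2)[OF b] ..
  qed
  have "(LINT x|lborel. gw \<alpha> x * gw \<beta> x * gw \<gamma> x) = 1"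
    using gw_1_integral s by (simp add: gw_mult)
  then have "1 = (LINT \<xi>|(lborel::((real^2)\<times>(real^2)) measure). ?H (fst \<xi>) (snd \<xi>) * (LINT x|lborel. echar ((fst \<xi> + snd \<xi>) \<bullet> x) * gw \<gamma> x))"
    using F(2) unfolding inner by simp
  also have "\<dots> = (LINT \<xi>|(lborel::((real^2)\<times>(real^2)) measure). complex_of_real (ker \<alpha> (fst \<xi>) * ker \<beta> (snd \<xi>) * ker \<gamma> (fst \<xi> + snd \<xi>)))"
    using FT2'(2)[OF g] by simp
  also have "\<dots> = complex_of_real (LINT u|(lborel::((real^2)\<times>(real^2)) measure). ker \<alpha> (fst u) * ker \<beta> (snd u) * ker \<gamma> (fst u + snd u))"
    by (rule integral_complex_of_real)
  finally have "complex_of_real (LINT u|(lborel::((real^2)\<times>(real^2)) measure). ker \<alpha> (fst u) * ker \<beta> (snd u) * ker \<gamma> (fst u + snd u)) = 1"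
    by (rule sym)
  then show ?thesis by (simp only: of_real_eq_1_iff)
qed

lemma ker_scale:
  assumes a: "a > 0" and e: "\<epsilon> > 0"
  shows "ker (a * \<epsilon>) (sqrt \<epsilon> *\<^sub>R v) = ker a v / \<epsilon>"
proof -
  have "(norm (sqrt \<epsilon> *\<^sub>R v))\<^sup>2 = \<epsilon> * (norm v)\<^sup>2"
    using e by (simp add: power_mult_distrib)
  then show ?thesis using a e unfolding ker_def by simp
qed

lemma SCALE:
  fixes m :: "(real^2)\<times>(real^2) \<Rightarrow> complex" and k1 k2 k3 :: "real^2"
  assumes a: "\<alpha> > 0" and b: "\<beta> > 0" and g: "\<gamma> > 0" and e: "\<epsilon> > 0"
  shows "complex_of_real \<epsilon> * (LINT \<xi>|lborel. m \<xi> * complex_of_real (ker (\<alpha>*\<epsilon>) (fst \<xi> - k1) * ker (\<beta>*\<epsilon>) (snd \<xi> - k2) * ker (\<gamma>*\<epsilon>) (k3 - (fst \<xi> + snd \<xi>))))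
    = (LINT u|lborel. m ((k1,k2) + sqrt \<epsilon> *\<^sub>R u) * complex_of_real (ker \<alpha> (fst u) * ker \<beta> (snd u) * ker \<gamma> ((1 / sqrt \<epsilon>) *\<^sub>R (k3 - k1 - k2) - (fst u + snd u))))"
proof -
  define c where "c = sqrt \<epsilon>"
  have c: "c > 0" "c \<noteq> 0" using e by (auto simp: c_def)
  let ?f = "\<lambda>\<xi>. m \<xi> * complex_of_real (ker (\<alpha>*\<epsilon>) (fst \<xi> - k1) * ker (\<beta>*\<epsilon>) (snd \<xi> - k2) * ker (\<gamma>*\<epsilon>) (k3 - (fst \<xi> + snd \<xi>)))"
  let ?F = "\<lambda>u. m ((k1,k2) + c *\<^sub>R u) * complex_of_real (ker \<alpha> (fst u) * ker \<beta> (snd u) * ker \<gamma> ((1 / c) *\<^sub>R (k3 - k1 - k2) - (fst u + snd u)))"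
  have pt: "?f ((k1,k2) + c *\<^sub>R u) = complex_of_real (1 / \<epsilon>^3) * ?F u" for u
  proof -
    have v: "k3 - (k1 + c *\<^sub>R fst u + (k2 + c *\<^sub>R snd u)) = c *\<^sub>R ((1 / c) *\<^sub>R (k3 - k1 - k2) - (fst u + snd u))"
      using c by (simp add: algebra_simps)
    have "?f ((k1,k2) + c *\<^sub>R u) = m ((k1,k2) + c *\<^sub>R u) * complex_of_real (ker (\<alpha>*\<epsilon>) (c *\<^sub>R fst u) * ker (\<beta>*\<epsilon>) (c *\<^sub>R snd u) * ker (\<gamma>*\<epsilon>) (c *\<^sub>R ((1 / c) *\<^sub>R (k3 - k1 - k2) - (fst u + snd u))))"
      by (simp add: v[symmetric])
    also have "\<dots> = m ((k1,k2) + c *\<^sub>R u) * complex_of_real (ker \<alpha> (fst u) / \<epsilon> * (ker \<beta> (snd u) / \<epsilon>) * (ker \<gamma> ((1 / c) *\<^sub>R (k3 - k1 - k2) - (fst u + snd u)) / \<epsilon>))"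
      unfolding c_def using a b g e by (simp only: ker_scale)
    also have "\<dots> = complex_of_real (1 / \<epsilon>^3) * ?F u"
      by (simp add: field_simps power3_eq_cube)
    finally show ?thesis .
  qed
  have "(LINT \<xi>|lborel. ?f \<xi>) = (\<bar>c\<bar> ^ DIM((real^2)\<times>(real^2))) *\<^sub>R (LINT u|lborel. ?f ((k1,k2) + c *\<^sub>R u))"
    using affine_integral(2)[OF c(2), of ?f "(k1,k2)"] by simp
  also have "\<dots> = complex_of_real (\<epsilon>^2) * (complex_of_real (1 / \<epsilon>^3) * (LINT u|lborel. ?F u))"
  proof -
    have "\<bar>c\<bar> ^ DIM((real^2)\<times>(real^2)) = \<epsilon>^2"
    proof -
      have "sqrt \<epsilon> ^ 4 = sqrt \<epsilon> ^ 2 * sqrt \<epsilon> ^ 2" by (simp flip: power_add)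
      then show ?thesis using c e by (simp add: c_def power2_eq_square)
    qed
    then show ?thesis unfolding pt integral_mult_right_zero by (simp add: scaleR_conv_of_real)
  qed
  finally have "complex_of_real \<epsilon> * (LINT \<xi>|lborel. ?f \<xi>) = complex_of_real (\<epsilon> * \<epsilon>^2 * (1 / \<epsilon>^3)) * (LINT u|lborel. ?F u)"
    by simp
  also have "\<epsilon> * \<epsilon>^2 * (1 / \<epsilon>^3) = 1" using e by (simp add: power3_eq_cube power2_eq_square)
  finally show ?thesis unfolding c_def by simp
qed

lemma ker_minus2[simp]: "ker \<delta> (- a - b) = ker \<delta> (a + b)"
proof -
  have "- a - b = - (a + b)" by simp
  then show ?thesis using ker_minus by metis
qed

lemma ker_far:
  fixes d s :: "real^2" assumes g: "\<gamma> > 0" and d: "d \<noteq> 0"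
  shows "((\<lambda>T. ker \<gamma> (T *\<^sub>R d - s)) \<longlongrightarrow> 0) at_top"
proof -
  have nd: "norm d > 0" using d by simp
  have "filterlim (\<lambda>T. norm d * T) at_top at_top"
    using filterlim_tendsto_pos_mult_at_top[OF tendsto_const nd filterlim_ident] .
  then have l1: "filterlim (\<lambda>T. - norm s + norm d * T) at_top at_top"
    by (rule filterlim_tendsto_add_at_top[OF tendsto_const])
  have r: "filterlim (\<lambda>T. norm (T *\<^sub>R d - s)) at_top at_top"
  proof (rule filterlim_at_top_mono[OF l1])
    show "\<forall>\<^sub>F T in at_top. - norm s + norm d * T \<le> norm (T *\<^sub>R d - s)"
      using eventually_ge_at_top[of 0]
    proof eventually_elim
      case (elim T)
      have "norm (T *\<^sub>R d) \<le> norm (T *\<^sub>R d - s) + norm s" using norm_triangle_ineq[of "T *\<^sub>R d - s" s] by simp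
      then have "norm d * T \<le> norm (T *\<^sub>R d - s) + norm s" using elim by (simp add: mult.commute)
      then show ?case by linarith
    qed
  qed
  have sq: "filterlim (\<lambda>r::real. (pi / \<gamma>) * r\<^sup>2) at_top at_top"
  proof -
    have p2: "filterlim (\<lambda>r::real. r^2) at_top at_top"
      by (rule filterlim_pow_at_top[OF _ filterlim_ident]) simp
    have pg: "0 < pi / \<gamma>" using g by simp
    show ?thesis using filterlim_tendsto_pos_mult_at_top[OF tendsto_const pg p2] .
  qed
  have e: "((\<lambda>r::real. exp (- ((pi / \<gamma>) * r\<^sup>2))) \<longlongrightarrow> 0) at_top"
    using filterlim_compose[OF exp_at_bot filterlim_compose[OF filterlim_uminus_at_bot_at_top sq]] .
  have "((\<lambda>T. exp (- ((pi / \<gamma>) * (norm (T *\<^sub>R d - s))\<^sup>2)) * (1/\<gamma>)) \<longlongrightarrow> 0 * (1/\<gamma>)) at_top"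
    by (intro tendsto_mult tendsto_const filterlim_compose[OF e r])
  moreover have "(\<lambda>T. exp (- ((pi / \<gamma>) * (norm (T *\<^sub>R d - s))\<^sup>2)) * (1/\<gamma>)) = (\<lambda>T. ker \<gamma> (T *\<^sub>R d - s))"
    by (simp add: ker_def fun_eq_iff)
  ultimately show ?thesis by simp
qed

lemma norm_m_bound:
  assumes "norm (m p) \<le> C * exp (norm p)"
  shows "norm (m p) \<le> \<bar>C\<bar> * exp (norm p)"
proof -
  have "C * exp (norm p) \<le> \<bar>C\<bar> * exp (norm p)" by (rule mult_right_mono) auto
  then show ?thesis using assms by linarith
qed

lemma LIMG:
  fixes m :: "(real^2)\<times>(real^2) \<Rightarrow> complex" and t :: "(real^2)\<times>(real^2)" and d :: "real^2"
  assumes mm: "m \<in> borel_measurable borel" and mc: "isCont m t"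
    and mb: "\<And>p. norm (m p) \<le> C * exp (norm p)"
    and a: "\<alpha> > 0" and b: "\<beta> > 0" and g: "\<gamma> > 0"
  shows "((\<lambda>c. LINT u|lborel. m (t + c *\<^sub>R u) * complex_of_real (ker \<alpha> (fst u) * ker \<beta> (snd u) * ker \<gamma> ((1 / c) *\<^sub>R d - (fst u + snd u))))
     \<longlongrightarrow> (if d = 0 then m t * complex_of_real (LINT u|lborel. ker \<alpha> (fst u) * ker \<beta> (snd u) * ker \<gamma> (fst u + snd u)) else 0)) (at_right 0)"
proof -
  let ?s = "\<lambda>T u. m (t + inverse T *\<^sub>R u) * complex_of_real (ker \<alpha> (fst u) * ker \<beta> (snd u) * ker \<gamma> (T *\<^sub>R d - (fst u + snd u)))"
  let ?f = "\<lambda>u::(real^2)\<times>(real^2). if d = 0 then m t * complex_of_real (ker \<alpha> (fst u) * ker \<beta> (snd u) * ker \<gamma> (fst u + snd u)) else 0"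
  let ?w = "\<lambda>u::(real^2)\<times>(real^2). (\<bar>C\<bar> * exp (norm t) / \<gamma>) * ((exp (norm (fst u)) * ker \<alpha> (fst u - 0)) * (exp (norm (snd u)) * ker \<beta> (snd u - 0)))"
  have mb': "norm (m p) \<le> \<bar>C\<bar> * exp (norm p)" for p using norm_m_bound[OF mb] .
  have kc: "continuous_on UNIV (\<lambda>u::(real^2)\<times>(real^2). ker \<alpha> (fst u) * ker \<beta> (snd u) * ker \<gamma> (fst u + snd u))"
    by (intro continuous_intros continuous_on_compose2[OF continuous_ker]) auto
  have fm0: "(\<lambda>u::(real^2)\<times>(real^2). m t * complex_of_real (ker \<alpha> (fst u) * ker \<beta> (snd u) * ker \<gamma> (fst u + snd u))) \<in> borel_measurable borel"
    by (intro borel_measurable_continuous_onI) (rule continuous_on_mult[OF continuous_on_const continuous_on_of_real[OF kc]])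
  have fm: "?f \<in> borel_measurable lborel"
    using fm0 by (cases "d = 0") simp_all
  have sm: "?s T \<in> borel_measurable lborel" for T
  proof -
    have "(\<lambda>u::(real^2)\<times>(real^2). m (t + inverse T *\<^sub>R u)) \<in> borel_measurable borel"
      by (rule measurable_compose[OF _ mm]) (intro borel_measurable_continuous_onI continuous_intros)
    moreover have "(\<lambda>u::(real^2)\<times>(real^2). complex_of_real (ker \<alpha> (fst u) * ker \<beta> (snd u) * ker \<gamma> (T *\<^sub>R d - (fst u + snd u)))) \<in> borel_measurable borel"
      by (intro borel_measurable_continuous_onI continuous_intros continuous_on_compose2[OF continuous_ker]) auto
    ultimately show ?thesis by simp
  qed
  have wi: "integrable lborel ?w"
  proof -
    have "integrable (lborel \<Otimes>\<^sub>M lborel) (\<lambda>u::(real^2)\<times>(real^2). (exp (norm (fst u)) * ker \<alpha> (fst u - 0)) * (exp (norm (snd u)) * ker \<beta> (snd u - 0)))"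
      using lborel_pair.intprod[OF expker_integrable[OF a, of 0] expker_integrable[OF b, of 0]] by simp
    then show ?thesis by (simp add: lborel_prod)
  qed
  have lim: "AE u in lborel. ((\<lambda>T. ?s T u) \<longlongrightarrow> ?f u) at_top"
  proof (rule AE_I2)
    fix u :: "(real^2)\<times>(real^2)"
    have "((\<lambda>T. t + inverse T *\<^sub>R u) \<longlongrightarrow> t + 0 *\<^sub>R u) at_top"
      by (intro tendsto_intros tendsto_inverse_0_at_top filterlim_ident)
    then have m1: "((\<lambda>T. m (t + inverse T *\<^sub>R u)) \<longlongrightarrow> m t) at_top"
      using isCont_tendsto_compose[OF mc] by simp
    show "((\<lambda>T. ?s T u) \<longlongrightarrow> ?f u) at_top"
    proof (cases "d = 0")
      case True
      then show ?thesis using m1 by (auto intro!: tendsto_intros)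
    next
      case False
      have "((\<lambda>T. ?s T u) \<longlongrightarrow> m t * complex_of_real (ker \<alpha> (fst u) * ker \<beta> (snd u) * 0)) at_top"
        by (intro tendsto_intros m1 ker_far[OF g False])
      then show ?thesis using False by simp
    qed
  qed
  have bound: "\<forall>\<^sub>F T in at_top. AE u in lborel. norm (?s T u) \<le> ?w u"
    using eventually_ge_at_top[of 1]
  proof eventually_elim
    case (elim T)
    show ?case
    proof (rule AE_I2)
      fix u :: "(real^2)\<times>(real^2)"
      have ka: "0 \<le> ker \<alpha> (fst u)" "0 \<le> ker \<beta> (snd u)" "0 \<le> ker \<gamma> (T *\<^sub>R d - (fst u + snd u))"
        using ker_nonneg a b g by auto
      have kg: "ker \<gamma> (T *\<^sub>R d - (fst u + snd u)) \<le> 1 / \<gamma>" using ker_le[OF g] .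
      have i1: "norm (inverse T *\<^sub>R u) = inverse T * norm u" using elim by simp
      have i2: "inverse T * norm u \<le> norm u"
        using elim by (intro mult_left_le_one_le) (auto simp: inverse_le_1_iff)
      have "norm (t + inverse T *\<^sub>R u) \<le> norm t + norm u"
        using norm_triangle_ineq[of t "inverse T *\<^sub>R u"] i1 i2 by linarith
      also have "norm u \<le> norm (fst u) + norm (snd u)"
        using norm_Pair_le[of "fst u" "snd u"] by simp
      finally have nu: "norm (t + inverse T *\<^sub>R u) \<le> norm t + norm (fst u) + norm (snd u)" by simp
      have "norm (?s T u) = norm (m (t + inverse T *\<^sub>R u)) * (ker \<alpha> (fst u) * ker \<beta> (snd u) * ker \<gamma> (T *\<^sub>R d - (fst u + snd u)))"
        using ka by (simp add: norm_mult)
      also have "\<dots> \<le> (\<bar>C\<bar> * exp (norm t + norm (fst u) + norm (snd u))) * (ker \<alpha> (fst u) * ker \<beta> (snd u) * (1 / \<gamma>))"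
      proof (intro mult_mono mult_left_mono)
        show "norm (m (t + inverse T *\<^sub>R u)) \<le> \<bar>C\<bar> * exp (norm t + norm (fst u) + norm (snd u))"
        proof -
          have "exp (norm (t + inverse T *\<^sub>R u)) \<le> exp (norm t + norm (fst u) + norm (snd u))"
            using nu by simp
          then have "\<bar>C\<bar> * exp (norm (t + inverse T *\<^sub>R u)) \<le> \<bar>C\<bar> * exp (norm t + norm (fst u) + norm (snd u))"
            by (rule mult_left_mono) simp
          then show ?thesis using mb'[of "t + inverse T *\<^sub>R u"] by linarith
        qed
      qed (use ka kg in auto)
      also have "\<dots> = ?w u"
        unfolding exp_add by (simp add: mult_ac divide_inverse)
      finally show "norm (?s T u) \<le> ?w u" .
    qed
  qed
  have T: "((\<lambda>T. LINT u|lborel. ?s T u) \<longlongrightarrow> (LINT u|lborel. ?f u)) at_top"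
    by (rule integral_dominated_convergence_at_top[OF fm sm wi lim bound])
  have If: "(LINT u|lborel. ?f u) = (if d = 0 then m t * complex_of_real (LINT u|lborel. ker \<alpha> (fst u) * ker \<beta> (snd u) * ker \<gamma> (fst u + snd u)) else 0)"
  proof (cases "d = 0")
    case True
    have "(LINT u|lborel. ?f u) = (LINT u|lborel. m t * complex_of_real (ker \<alpha> (fst u) * ker \<beta> (snd u) * ker \<gamma> (fst u + snd u)))"
      using True by simp
    also have "\<dots> = m t * complex_of_real (LINT u|lborel. ker \<alpha> (fst u) * ker \<beta> (snd u) * ker \<gamma> (fst u + snd u))"
      by (simp only: integral_mult_right_zero integral_complex_of_real)
    finally show ?thesis using True by simp
  qed simp
  show ?thesis
  proof -
    have eq: "\<And>T::real. 1 / inverse T = T" by (metis inverse_eq_divide inverse_inverse_eq)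
    let ?G = "\<lambda>c. LINT u|lborel. m (t + c *\<^sub>R u) * complex_of_real (ker \<alpha> (fst u) * ker \<beta> (snd u) * ker \<gamma> ((1 / c) *\<^sub>R d - (fst u + snd u)))"
    have "(\<lambda>T. ?G (inverse T)) = (\<lambda>T. LINT u|lborel. ?s T u)"
      by (rule ext) (simp only: eq)
    then have "((\<lambda>T. ?G (inverse T)) \<longlongrightarrow> (LINT u|lborel. ?f u)) at_top" using T by (simp only:)
    then have "(?G \<longlongrightarrow> (LINT u|lborel. ?f u)) (at_right 0)"
      by (rule filterlim_at_right_to_top[THEN iffD2])
    then show ?thesis by (simp only: If)
  qed
qed

lemma echar_int: "n \<in> \<int> \<Longrightarrow> echar n = 1"
  unfolding echar_def using cis_multiple_2pi[of n] cis_conv_exp[of "2 * pi * n"]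
  by (simp add: mult.commute)

lemma orth1:
  fixes a n :: real assumes n: "n \<in> \<int>"
  shows "integrable lborel (\<lambda>t. complex_of_real (indicator {a..a+1} t) * echar (t * n))"
    and "(LINT t|lborel. complex_of_real (indicator {a..a+1} t) * echar (t * n)) = (if n = 0 then 1 else 0)"
proof -
  have e: "complex_of_real (indicator {a..a+1} t) * echar (t * n) = indicator {a..a+1} t *\<^sub>R echar (t * n)" for t
    by (simp add: scaleR_conv_of_real)
  have c: "continuous_on {a..a+1} (\<lambda>t. echar (t * n))"
    by (intro continuous_on_compose2[OF continuous_echar] continuous_intros) auto
  show "integrable lborel (\<lambda>t. complex_of_real (indicator {a..a+1} t) * echar (t * n))"
    unfolding e using borel_integrable_atLeastAtMost'[OF c] by (simp add: set_integrable_def)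
  show "(LINT t|lborel. complex_of_real (indicator {a..a+1} t) * echar (t * n)) = (if n = 0 then 1 else 0)"
  proof (cases "n = 0")
    case True
    have "(LINT t|lborel. indicator {a..a+1} t *\<^sub>R echar (t * n)) = complex_of_real (a+1) - complex_of_real a"
    proof (rule integral_FTC_atLeastAtMost)
      show "continuous_on {a..a+1} (\<lambda>t. echar (t * n))" by fact
      fix x assume "a \<le> x" "x \<le> a + 1"
      show "(complex_of_real has_vector_derivative echar (x * n)) (at x within {a..a+1})"
        using True by (auto intro!: derivative_eq_intros)
    qed simp
    then show ?thesis unfolding e using True by simp
  next
    case False
    define c where "c = complex_of_real (2 * pi * n) * \<i>"
    have c0: "c \<noteq> 0" using False by (simp add: c_def)
    have ec: "echar (t * n) = exp (complex_of_real t * c)" for t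
      unfolding echar_def c_def by (simp add: algebra_simps)
    have "(LINT t|lborel. indicator {a..a+1} t *\<^sub>R echar (t * n)) = exp (complex_of_real (a+1) * c) / c - exp (complex_of_real a * c) / c"
    proof (rule integral_FTC_atLeastAtMost[where F = "\<lambda>t. exp (complex_of_real t * c) / c"])
      show "continuous_on {a..a+1} (\<lambda>t. echar (t * n))" by fact
      fix x assume "a \<le> x" "x \<le> a + 1"
      have "((\<lambda>z. exp (z * c) / c) has_field_derivative exp (complex_of_real x * c)) (at (complex_of_real x))"
        using c0 by (auto intro!: derivative_eq_intros)
      from has_vector_derivative_real_field[OF this]
      show "((\<lambda>t. exp (complex_of_real t * c) / c) has_vector_derivative echar (x * n)) (at x within {a..a+1})"
        unfolding ec by (rule has_vector_derivative_at_within)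
    qed simp
    also have "\<dots> = 0"
    proof -
      have "exp (complex_of_real (a+1) * c) = exp (complex_of_real a * c) * echar n"
        unfolding echar_def c_def by (simp add: exp_add[symmetric] algebra_simps)
      then show ?thesis using echar_int[OF n] by simp
    qed
    finally show ?thesis unfolding e using False by simp
  qed
qed

lemma Basis_vec2: "b \<in> (Basis :: (real^2) set) \<Longrightarrow> \<exists>i. b = axis i 1"
  by (auto simp: Basis_vec_def)

lemma Zsq_inner: "j \<in> Zsq \<Longrightarrow> b \<in> (Basis :: (real^2) set) \<Longrightarrow> j \<bullet> b \<in> \<int>"
  using Basis_vec2[of b] by (auto simp: Zsq_def inner_axis)

lemma Zsq_diff: "j \<in> Zsq \<Longrightarrow> k \<in> Zsq \<Longrightarrow> j - k \<in> Zsq"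
  by (auto simp: Zsq_def)

lemma Zsq_add: "j \<in> Zsq \<Longrightarrow> k \<in> Zsq \<Longrightarrow> j + k \<in> Zsq"
  by (auto simp: Zsq_def)

lemma ORTH:
  fixes j l u :: "real^2"
  assumes j: "j \<in> Zsq" and lu: "\<And>b. b \<in> Basis \<Longrightarrow> l \<bullet> b = a \<and> u \<bullet> b = a + 1"
  shows "integrable lborel (\<lambda>x. indicator (cbox l u) x *\<^sub>R echar (j \<bullet> x))"
    and "(LINT x|lborel. indicator (cbox l u) x *\<^sub>R echar (j \<bullet> x)) = (if j = 0 then 1 else 0)"
proof -
  let ?\<phi> = "\<lambda>b t. complex_of_real (indicator {a..a+1} t) * echar (t * (j \<bullet> b))"
  have int: "\<And>b. b \<in> Basis \<Longrightarrow> integrable lborel (?\<phi> b)"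
    using orth1(1) Zsq_inner[OF j] by blast
  have ind: "indicator (cbox l u) x = (\<Prod>b\<in>Basis. indicator {a..a+1} (x \<bullet> b) :: real)" for x
    using lu by (auto simp: cbox_def split: split_indicator)
  have eq: "indicator (cbox l u) x *\<^sub>R echar (j \<bullet> x) = (\<Prod>b\<in>Basis. ?\<phi> b (x \<bullet> b))" for x
  proof -
    have "echar (j \<bullet> x) = (\<Prod>b\<in>Basis. echar ((x \<bullet> b) * (j \<bullet> b)))"
      by (simp add: euclidean_inner[of j x] echar_sum mult.commute)
    then show ?thesis by (simp add: ind scaleR_conv_of_real prod.distrib)
  qed
  show "integrable lborel (\<lambda>x. indicator (cbox l u) x *\<^sub>R echar (j \<bullet> x))"
    unfolding eq using prodB(1)[of ?\<phi>, OF int] by simp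
  have "(LINT x|lborel. indicator (cbox l u) x *\<^sub>R echar (j \<bullet> x)) = (\<Prod>b\<in>Basis. LINT t|lborel. ?\<phi> b t)"
    unfolding eq using prodB(2)[of ?\<phi>, OF int] by simp
  also have "\<dots> = (\<Prod>b\<in>(Basis::(real^2) set). if j \<bullet> b = 0 then 1 else 0)"
    using orth1(2) Zsq_inner[OF j] by (intro prod.cong) auto
  also have "\<dots> = (if j = 0 then 1 else 0)"
  proof (cases "j = 0")
    case True then show ?thesis by simp
  next
    case False
    then obtain b where b: "b \<in> Basis" "j \<bullet> b \<noteq> 0" using euclidean_all_zero_iff[of j] by blast
    have "(\<Prod>b\<in>(Basis::(real^2) set). if j \<bullet> b = 0 then 1 else 0) = (0::complex)"
      by (rule prod_zero) (use b in auto)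
    then show ?thesis using False by simp
  qed
  finally show "(LINT x|lborel. indicator (cbox l u) x *\<^sub>R echar (j \<bullet> x)) = (if j = 0 then 1 else 0)" .
qed

lemma FTP:
  fixes a :: "real^2 \<Rightarrow> complex" assumes K: "finite K" and d: "\<delta> > 0"
  shows "fourierR (\<lambda>y. (\<Sum>k\<in>K. a k * echar (k \<bullet> y)) * gw \<delta> y) \<xi> = (\<Sum>k\<in>K. a k * complex_of_real (ker \<delta> (\<xi> - k)))"
proof -
  have e: "(\<Sum>k\<in>K. a k * echar (k \<bullet> x)) * gw \<delta> x * echar (- (x \<bullet> \<xi>)) = (\<Sum>k\<in>K. a k * (gw \<delta> x * echar (- (x \<bullet> (\<xi> - k)))))" for x
  proof -
    have "echar (k \<bullet> x) * echar (- (x \<bullet> \<xi>)) = echar (- (x \<bullet> (\<xi> - k)))" for k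
      by (simp add: echar_add[symmetric] inner_diff_right inner_commute)
    moreover have "(\<Sum>k\<in>K. a k * echar (k \<bullet> x)) * gw \<delta> x * echar (- (x \<bullet> \<xi>)) = (\<Sum>k\<in>K. a k * (gw \<delta> x * (echar (k \<bullet> x) * echar (- (x \<bullet> \<xi>)))))"
      unfolding sum_distrib_right by (simp add: mult_ac)
    ultimately show ?thesis by simp
  qed
  show ?thesis
    unfolding fourierR_def e
    using FT2[OF d] by (subst Bochner_Integration.integral_sum) auto
qed

lemma sum3:
  "(\<Sum>i\<in>A. f i) * (\<Sum>j\<in>B. g j) * (\<Sum>k\<in>C. h k) = (\<Sum>(i,j,k)\<in>A\<times>B\<times>C. f i * g j * h k)"
  for f g h :: "'a \<Rightarrow> 'b::comm_semiring_1"
proof -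
  have 1: "(\<Sum>j\<in>B. g j) * (\<Sum>k\<in>C. h k) = (\<Sum>j\<in>B. \<Sum>k\<in>C. g j * h k)" by (rule sum_product)
  have "(\<Sum>i\<in>A. f i) * (\<Sum>j\<in>B. g j) * (\<Sum>k\<in>C. h k) = (\<Sum>i\<in>A. f i) * ((\<Sum>j\<in>B. g j) * (\<Sum>k\<in>C. h k))"
    by (simp only: mult.assoc)
  also have "\<dots> = (\<Sum>i\<in>A. f i * (\<Sum>j\<in>B. \<Sum>k\<in>C. g j * h k))"
    unfolding 1 by (rule sum_distrib_right)
  also have "\<dots> = (\<Sum>i\<in>A. \<Sum>j\<in>B. \<Sum>k\<in>C. f i * (g j * h k))"
    by (simp add: sum_distrib_left)
  also have "\<dots> = (\<Sum>i\<in>A. \<Sum>j\<in>B. \<Sum>k\<in>C. f i * g j * h k)"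
    by (simp add: mult.assoc)
  also have "\<dots> = (\<Sum>(i,j,k)\<in>A\<times>B\<times>C. f i * g j * h k)"
    by (simp add: sum.cartesian_product)
  finally show ?thesis .
qed

lemma box_int_trig:
  fixes j :: "'i \<Rightarrow> real^2" and l u :: "real^2" and w :: "'i \<Rightarrow> complex"
  assumes I: "finite I" and j: "\<And>i. i \<in> I \<Longrightarrow> j i \<in> Zsq"
    and lu: "\<And>b. b \<in> Basis \<Longrightarrow> l \<bullet> b = a \<and> u \<bullet> b = a + 1"
  shows "(LINT x:cbox l u|lborel. (\<Sum>i\<in>I. w i * echar (j i \<bullet> x))) = (\<Sum>i\<in>I. w i * (if j i = 0 then 1 else 0))"
proof -
  have e: "indicator (cbox l u) x *\<^sub>R (\<Sum>i\<in>I. w i * echar (j i \<bullet> x)) = (\<Sum>i\<in>I. w i * (indicator (cbox l u) x *\<^sub>R echar (j i \<bullet> x)))" for x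
    by (simp add: scaleR_sum_right)
  have "(LINT x|lborel. (\<Sum>i\<in>I. w i * (indicator (cbox l u) x *\<^sub>R echar (j i \<bullet> x)))) = (\<Sum>i\<in>I. LINT x|lborel. w i * (indicator (cbox l u) x *\<^sub>R echar (j i \<bullet> x)))"
  proof (rule Bochner_Integration.integral_sum)
    fix i assume i: "i \<in> I"
    show "integrable lborel (\<lambda>x. w i * (indicator (cbox l u) x *\<^sub>R echar (j i \<bullet> x)))"
      by (rule integrable_mult_right) (rule ORTH(1)[OF j[OF i] lu])
  qed
  also have "\<dots> = (\<Sum>i\<in>I. w i * (if j i = 0 then 1 else 0))"
  proof (intro sum.cong refl)
    fix i assume i: "i \<in> I"
    show "(LINT x|lborel. w i * (indicator (cbox l u) x *\<^sub>R echar (j i \<bullet> x))) = w i * (if j i = 0 then 1 else 0)"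
      by (simp only: integral_mult_right_zero ORTH(2)[OF j[OF i] lu])
  qed
  finally show ?thesis
    unfolding set_lebesgue_integral_def e .
qed

lemma FTT:
  fixes a :: "real^2 \<Rightarrow> complex" assumes K: "finite K" "K \<subseteq> Zsq" and n: "n \<in> Zsq"
  shows "fourierT (\<lambda>x. \<Sum>k\<in>K. a k * echar (k \<bullet> x)) n = (if n \<in> K then a n else 0)"
proof -
  have lu: "(0::real^2) \<bullet> b = 0 \<and> (vec 1 :: real^2) \<bullet> b = 0 + 1" if b: "b \<in> Basis" for b
  proof -
    obtain i where "b = axis i 1" using Basis_vec2[OF b] by blast
    then show ?thesis by (simp add: inner_axis)
  qed
  have pw: "(\<lambda>x. (\<Sum>k\<in>K. a k * echar (k \<bullet> x)) * echar (- (n \<bullet> x))) = (\<lambda>x. \<Sum>k\<in>K. a k * echar ((k - n) \<bullet> x))"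
  proof (rule ext)
    fix x :: "real^2"
    have "echar (k \<bullet> x) * echar (- (n \<bullet> x)) = echar ((k - n) \<bullet> x)" for k
      by (simp add: echar_add[symmetric] inner_diff_left)
    then show "(\<Sum>k\<in>K. a k * echar (k \<bullet> x)) * echar (- (n \<bullet> x)) = (\<Sum>k\<in>K. a k * echar ((k - n) \<bullet> x))"
      unfolding sum_distrib_right by (simp add: mult_ac)
  qed
  have "fourierT (\<lambda>x. \<Sum>k\<in>K. a k * echar (k \<bullet> x)) n = (LINT x:cbox 0 (vec 1)|lborel. \<Sum>k\<in>K. a k * echar ((k - n) \<bullet> x))"
    unfolding fourierT_def pw ..
  also have "\<dots> = (\<Sum>k\<in>K. a k * (if k - n = 0 then 1 else 0))"
    by (rule box_int_trig[OF K(1) Zsq_diff[OF _ n] lu]) (use K(2) in auto)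
  also have "\<dots> = (\<Sum>k\<in>K. if k = n then a k else 0)"
    by (intro sum.cong) auto
  also have "\<dots> = (if n \<in> K then a n else 0)"
    using K by (simp add: sum.delta')
  finally show ?thesis .
qed

lemma TERMINT:
  fixes m :: "(real^2)\<times>(real^2) \<Rightarrow> complex" and k1 k2 k3 :: "real^2"
  assumes mm: "m \<in> borel_measurable borel" and mb: "\<And>p. norm (m p) \<le> C * exp (norm p)"
    and d1: "d1 > 0" and d2: "d2 > 0" and d3: "d3 > 0"
  shows "integrable lborel (\<lambda>\<xi>. m \<xi> * complex_of_real (ker d1 (fst \<xi> - k1) * ker d2 (snd \<xi> - k2) * ker d3 (k3 - (fst \<xi> + snd \<xi>))))"
proof (rule Bochner_Integration.integrable_bound)
  let ?w = "\<lambda>\<xi>::(real^2)\<times>(real^2). (\<bar>C\<bar> / d3) * ((exp (norm (fst \<xi>)) * ker d1 (fst \<xi> - k1)) * (exp (norm (snd \<xi>)) * ker d2 (snd \<xi> - k2)))"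
  have "integrable (lborel \<Otimes>\<^sub>M lborel) (\<lambda>\<xi>::(real^2)\<times>(real^2). (exp (norm (fst \<xi>)) * ker d1 (fst \<xi> - k1)) * (exp (norm (snd \<xi>)) * ker d2 (snd \<xi> - k2)))"
    using lborel_pair.intprod[OF expker_integrable[OF d1, of k1] expker_integrable[OF d2, of k2]] by simp
  then show "integrable lborel ?w" by (simp add: lborel_prod)
  have kc: "continuous_on UNIV (\<lambda>\<xi>::(real^2)\<times>(real^2). complex_of_real (ker d1 (fst \<xi> - k1) * ker d2 (snd \<xi> - k2) * ker d3 (k3 - (fst \<xi> + snd \<xi>))))"
    by (intro continuous_intros continuous_on_compose2[OF continuous_ker]) auto
  show "(\<lambda>\<xi>. m \<xi> * complex_of_real (ker d1 (fst \<xi> - k1) * ker d2 (snd \<xi> - k2) * ker d3 (k3 - (fst \<xi> + snd \<xi>)))) \<in> borel_measurable lborel"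
    using borel_measurable_times[OF mm borel_measurable_continuous_onI[OF kc]] by simp
  show "AE \<xi> in lborel. norm (m \<xi> * complex_of_real (ker d1 (fst \<xi> - k1) * ker d2 (snd \<xi> - k2) * ker d3 (k3 - (fst \<xi> + snd \<xi>)))) \<le> norm (?w \<xi>)"
  proof (rule AE_I2)
    fix \<xi> :: "(real^2)\<times>(real^2)"
    have k: "0 \<le> ker d1 (fst \<xi> - k1)" "0 \<le> ker d2 (snd \<xi> - k2)" "0 \<le> ker d3 (k3 - (fst \<xi> + snd \<xi>))"
      using ker_nonneg d1 d2 d3 by auto
    have k3: "ker d3 (k3 - (fst \<xi> + snd \<xi>)) \<le> 1 / d3" using ker_le[OF d3] .
    have mb': "norm (m \<xi>) \<le> \<bar>C\<bar> * exp (norm (fst \<xi>) + norm (snd \<xi>))"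
    proof -
      have "norm \<xi> \<le> norm (fst \<xi>) + norm (snd \<xi>)" using norm_Pair_le[of "fst \<xi>" "snd \<xi>"] by simp
      then have "\<bar>C\<bar> * exp (norm \<xi>) \<le> \<bar>C\<bar> * exp (norm (fst \<xi>) + norm (snd \<xi>))"
        by (intro mult_left_mono) auto
      moreover have "C * exp (norm \<xi>) \<le> \<bar>C\<bar> * exp (norm \<xi>)" by (rule mult_right_mono) auto
      ultimately show ?thesis using mb[of \<xi>] by linarith
    qed
    have "norm (m \<xi> * complex_of_real (ker d1 (fst \<xi> - k1) * ker d2 (snd \<xi> - k2) * ker d3 (k3 - (fst \<xi> + snd \<xi>))))
        = norm (m \<xi>) * (ker d1 (fst \<xi> - k1) * ker d2 (snd \<xi> - k2) * ker d3 (k3 - (fst \<xi> + snd \<xi>)))"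
      using k by (simp add: norm_mult)
    also have "\<dots> \<le> (\<bar>C\<bar> * exp (norm (fst \<xi>) + norm (snd \<xi>))) * (ker d1 (fst \<xi> - k1) * ker d2 (snd \<xi> - k2) * (1 / d3))"
      using mb' k k3 by (intro mult_mono mult_left_mono) auto
    also have "\<dots> = ?w \<xi>" unfolding exp_add by (simp add: mult_ac divide_inverse)
    also have "\<dots> \<le> norm (?w \<xi>)" by (metis abs_ge_self real_norm_def)
    finally show "norm (m \<xi> * complex_of_real (ker d1 (fst \<xi> - k1) * ker d2 (snd \<xi> - k2) * ker d3 (k3 - (fst \<xi> + snd \<xi>)))) \<le> norm (?w \<xi>)" .
  qed
qed

lemma sqrt_at_right: "filterlim sqrt (at_right 0) (at_right (0::real))"
proof (rule tendsto_imp_filterlim_at_right)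
  have "((\<lambda>x. sqrt x) \<longlongrightarrow> sqrt 0) (at_right (0::real))"
    by (intro tendsto_intros)
  then show "(sqrt \<longlongrightarrow> 0) (at_right (0::real))" by simp
  show "\<forall>\<^sub>F x in at_right 0. 0 < sqrt x"
    using eventually_at_right_less[of "0::real"] by eventually_elim simp
qed

lemma CLAIMT:
  fixes m :: "(real^2)\<times>(real^2) \<Rightarrow> complex" and k1 k2 k3 :: "real^2"
  assumes mm: "m \<in> borel_measurable borel" and mc: "isCont m (k1, k2)"
    and mb: "\<And>p. norm (m p) \<le> C * exp (norm p)"
    and a: "\<alpha> > 0" and b: "\<beta> > 0" and g: "\<gamma> > 0" and s: "\<alpha> + \<beta> + \<gamma> = 1"
  shows "((\<lambda>\<epsilon>. complex_of_real \<epsilon> * (LINT \<xi>|lborel. m \<xi> * complex_of_real (ker (\<alpha>*\<epsilon>) (fst \<xi> - k1) * ker (\<beta>*\<epsilon>) (snd \<xi> - k2) * ker (\<gamma>*\<epsilon>) (k3 - (fst \<xi> + snd \<xi>)))))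
     \<longlongrightarrow> (if k3 = k1 + k2 then m (k1, k2) else 0)) (at_right 0)"
proof -
  let ?G = "\<lambda>c. LINT u|lborel. m ((k1,k2) + c *\<^sub>R u) * complex_of_real (ker \<alpha> (fst u) * ker \<beta> (snd u) * ker \<gamma> ((1 / c) *\<^sub>R (k3 - k1 - k2) - (fst u + snd u)))"
  have L: "(?G \<longlongrightarrow> (if k3 - k1 - k2 = 0 then m (k1,k2) * complex_of_real (LINT u|lborel. ker \<alpha> (fst u) * ker \<beta> (snd u) * ker \<gamma> (fst u + snd u)) else 0)) (at_right 0)"
    by (rule LIMG[OF mm mc mb a b g])
  have e: "(if k3 - k1 - k2 = 0 then m (k1,k2) * complex_of_real (LINT u|(lborel::((real^2)\<times>(real^2)) measure). ker \<alpha> (fst u) * ker \<beta> (snd u) * ker \<gamma> (fst u + snd u)) else 0)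
     = (if k3 = k1 + k2 then m (k1, k2) else 0)"
    using GID[OF a b g s] by (auto simp: algebra_simps)
  have lim: "((\<lambda>\<epsilon>. ?G (sqrt \<epsilon>)) \<longlongrightarrow> (if k3 = k1 + k2 then m (k1, k2) else 0)) (at_right 0)"
    using filterlim_compose[OF L sqrt_at_right] unfolding e .
  have ev: "\<forall>\<^sub>F \<epsilon> in at_right 0. ?G (sqrt \<epsilon>) = complex_of_real \<epsilon> * (LINT \<xi>|lborel. m \<xi> * complex_of_real (ker (\<alpha>*\<epsilon>) (fst \<xi> - k1) * ker (\<beta>*\<epsilon>) (snd \<xi> - k2) * ker (\<gamma>*\<epsilon>) (k3 - (fst \<xi> + snd \<xi>))))"
    using eventually_at_right_less[of "0::real"]
  proof eventually_elim
    case (elim \<epsilon>)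
    show ?case using SCALE[OF a b g elim, of m k1 k2 k3] by simp
  qed
  show ?thesis using iffD1[OF tendsto_cong[OF ev] lim] .
qed

lemma sum3p: "(\<Sum>i\<in>A\<times>B\<times>C. F i) = (\<Sum>n1\<in>A. \<Sum>n2\<in>B. \<Sum>k3\<in>C. F (n1, n2, k3))"
  by (simp add: sum.cartesian_product)

lemma RHS:
  fixes a b c :: "real^2 \<Rightarrow> complex" and m :: "(real^2)\<times>(real^2) \<Rightarrow> complex"
  assumes K1: "finite K1" "K1 \<subseteq> Zsq" and K2: "finite K2" "K2 \<subseteq> Zsq" and K3: "finite K3" "K3 \<subseteq> Zsq"
    and Pd: "\<And>x. P x = (\<Sum>k\<in>K1. a k * echar (k \<bullet> x))"
    and Qd: "\<And>x. Q x = (\<Sum>k\<in>K2. b k * echar (k \<bullet> x))"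
    and Rd: "\<And>x. R x = (\<Sum>k\<in>K3. c k * echar (k \<bullet> x))"
  shows "(LINT x:cbox (vec (-1/2)) (vec (1/2))|lborel. periodization m P Q x * cnj (R x))
       = (\<Sum>n1\<in>K1. \<Sum>n2\<in>K2. \<Sum>k3\<in>K3. a n1 * b n2 * cnj (c k3) * (if k3 = n1 + n2 then m (n1,n2) else 0))"
proof -
  have Pe: "P = (\<lambda>x. \<Sum>k\<in>K1. a k * echar (k \<bullet> x))" by (rule ext) (rule Pd)
  have Qe: "Q = (\<lambda>x. \<Sum>k\<in>K2. b k * echar (k \<bullet> x))" by (rule ext) (rule Qd)
  have fT1: "fourierT P n = (if n \<in> K1 then a n else 0)" if "n \<in> Zsq" for n
    unfolding Pe by (rule FTT[OF K1 that])
  have fT2: "fourierT Q n = (if n \<in> K2 then b n else 0)" if "n \<in> Zsq" for n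
    unfolding Qe by (rule FTT[OF K2 that])
  have per: "periodization m P Q x = (\<Sum>n1\<in>K1. \<Sum>n2\<in>K2. m (n1,n2) * a n1 * b n2 * echar ((n1 + n2) \<bullet> x))" for x
  proof -
    have "periodization m P Q x = (\<Sum>\<^sub>\<infinity>(n1, n2)\<in>K1 \<times> K2. m (n1, n2) * a n1 * b n2 * echar ((n1 + n2) \<bullet> x))"
      unfolding periodization_def
    proof (rule infsum_cong_neutral)
      fix p assume "p \<in> K1 \<times> K2 - Zsq \<times> Zsq"
      then show "(case p of (n1, n2) \<Rightarrow> m (n1, n2) * a n1 * b n2 * echar ((n1 + n2) \<bullet> x)) = 0"
        using K1 K2 by auto
    next
      fix p assume "p \<in> Zsq \<times> Zsq - K1 \<times> K2"
      then show "(case p of (n1, n2) \<Rightarrow> m (n1, n2) * fourierT P n1 * fourierT Q n2 * echar ((n1 + n2) \<bullet> x)) = 0"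
        by (auto simp: fT1 fT2 split: if_splits)
    next
      fix p assume "p \<in> Zsq \<times> Zsq \<inter> K1 \<times> K2"
      then show "(case p of (n1, n2) \<Rightarrow> m (n1, n2) * fourierT P n1 * fourierT Q n2 * echar ((n1 + n2) \<bullet> x))
          = (case p of (n1, n2) \<Rightarrow> m (n1, n2) * a n1 * b n2 * echar ((n1 + n2) \<bullet> x))"
        by (auto simp: fT1 fT2)
    qed
    also have "\<dots> = (\<Sum>(n1, n2)\<in>K1 \<times> K2. m (n1, n2) * a n1 * b n2 * echar ((n1 + n2) \<bullet> x))"
      using K1 K2 by simp
    also have "\<dots> = (\<Sum>n1\<in>K1. \<Sum>n2\<in>K2. m (n1,n2) * a n1 * b n2 * echar ((n1 + n2) \<bullet> x))"
      by (simp add: sum.cartesian_product)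
    finally show ?thesis .
  qed
  have cR: "cnj (R x) = (\<Sum>k3\<in>K3. cnj (c k3) * echar (- (k3 \<bullet> x)))" for x
    by (simp add: Rd echar_minus)
  define W where "W = (\<lambda>(n1::real^2, n2::real^2, k3::real^2). m (n1,n2) * a n1 * b n2 * cnj (c k3))"
  define J where "J = (\<lambda>(n1::real^2, n2::real^2, k3::real^2). n1 + n2 - k3)"
  have integrand: "periodization m P Q x * cnj (R x) = (\<Sum>i\<in>K1\<times>K2\<times>K3. W i * echar (J i \<bullet> x))" for x
  proof -
    have e: "echar ((n1 + n2) \<bullet> x) * echar (- (k3 \<bullet> x)) = echar ((n1 + n2 - k3) \<bullet> x)" for n1 n2 k3
      by (simp add: echar_add[symmetric] inner_diff_left)
    have "periodization m P Q x * cnj (R x) = (\<Sum>n1\<in>K1. \<Sum>n2\<in>K2. \<Sum>k3\<in>K3. (m (n1,n2) * a n1 * b n2 * echar ((n1 + n2) \<bullet> x)) * (cnj (c k3) * echar (- (k3 \<bullet> x))))"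
      unfolding per cR sum_distrib_right by (simp only: sum_distrib_left)
    also have "\<dots> = (\<Sum>n1\<in>K1. \<Sum>n2\<in>K2. \<Sum>k3\<in>K3. W (n1, n2, k3) * echar (J (n1, n2, k3) \<bullet> x))"
      unfolding W_def J_def by (simp add: e[symmetric] mult_ac)
    also have "\<dots> = (\<Sum>i\<in>K1\<times>K2\<times>K3. W i * echar (J i \<bullet> x))"
      by (rule sum3p[symmetric])
    finally show ?thesis .
  qed
  have lu: "(vec (-1/2)::real^2) \<bullet> b = -1/2 \<and> (vec (1/2) :: real^2) \<bullet> b = -1/2 + 1" if b: "b \<in> Basis" for b
  proof -
    obtain i where "b = axis i 1" using Basis_vec2[OF b] by blast
    then show ?thesis by (simp add: inner_axis)
  qed
  have JZ: "J i \<in> Zsq" if "i \<in> K1\<times>K2\<times>K3" for i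
    using that K1 K2 K3 unfolding J_def by (auto intro!: Zsq_diff Zsq_add)
  have "(LINT x:cbox (vec (-1/2)) (vec (1/2))|lborel. periodization m P Q x * cnj (R x))
      = (LINT x:cbox (vec (-1/2)) (vec (1/2))|lborel. (\<Sum>i\<in>K1\<times>K2\<times>K3. W i * echar (J i \<bullet> x)))"
    unfolding integrand ..
  also have "\<dots> = (\<Sum>i\<in>K1\<times>K2\<times>K3. W i * (if J i = 0 then 1 else 0))"
    by (rule box_int_trig[OF _ JZ lu]) (use K1 K2 K3 in auto)
  also have "\<dots> = (\<Sum>n1\<in>K1. \<Sum>n2\<in>K2. \<Sum>k3\<in>K3. W (n1, n2, k3) * (if J (n1, n2, k3) = 0 then 1 else 0))"
    by (rule sum3p)
  also have "\<dots> = (\<Sum>n1\<in>K1. \<Sum>n2\<in>K2. \<Sum>k3\<in>K3. a n1 * b n2 * cnj (c k3) * (if k3 = n1 + n2 then m (n1,n2) else 0))"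
    unfolding W_def J_def by (intro sum.cong refl) (auto simp: algebra_simps)
  finally show ?thesis .
qed

lemma LHSEQ:
  fixes a b c :: "real^2 \<Rightarrow> complex" and m :: "(real^2)\<times>(real^2) \<Rightarrow> complex"
  assumes K1: "finite K1" and K2: "finite K2" and K3: "finite K3"
    and Pd: "\<And>x. P x = (\<Sum>k\<in>K1. a k * echar (k \<bullet> x))"
    and Qd: "\<And>x. Q x = (\<Sum>k\<in>K2. b k * echar (k \<bullet> x))"
    and Rd: "\<And>x. R x = (\<Sum>k\<in>K3. c k * echar (k \<bullet> x))"
    and mm: "m \<in> borel_measurable borel" and mb: "\<And>p. norm (m p) \<le> C * exp (norm p)"
    and d1: "d1 > 0" and d2: "d2 > 0" and d3: "d3 > 0"
  shows "(LINT x|lborel. bilin_mult m (\<lambda>y. P y * gw d1 y) (\<lambda>y. Q y * gw d2 y) x * cnj (R x) * gw d3 x)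
   = (\<Sum>n1\<in>K1. \<Sum>n2\<in>K2. \<Sum>k3\<in>K3. a n1 * b n2 * cnj (c k3) *
        (LINT \<xi>|lborel. m \<xi> * complex_of_real (ker d1 (fst \<xi> - n1) * ker d2 (snd \<xi> - n2) * ker d3 (k3 - (fst \<xi> + snd \<xi>)))))"
proof -
  define A where "A = (\<lambda>\<xi>. \<Sum>k\<in>K1. a k * complex_of_real (ker d1 (\<xi> - k)))"
  define B where "B = (\<lambda>\<xi>. \<Sum>k\<in>K2. b k * complex_of_real (ker d2 (\<xi> - k)))"
  have fA: "fourierR (\<lambda>y. P y * gw d1 y) = A"
  proof -
    have "(\<lambda>y. P y * gw d1 y) = (\<lambda>y. (\<Sum>k\<in>K1. a k * echar (k \<bullet> y)) * gw d1 y)" by (simp add: Pd)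
    then show ?thesis unfolding A_def using FTP[OF K1 d1] by (intro ext) simp
  qed
  have fB: "fourierR (\<lambda>y. Q y * gw d2 y) = B"
  proof -
    have "(\<lambda>y. Q y * gw d2 y) = (\<lambda>y. (\<Sum>k\<in>K2. b k * echar (k \<bullet> y)) * gw d2 y)" by (simp add: Qd)
    then show ?thesis unfolding B_def using FTP[OF K2 d2] by (intro ext) simp
  qed
  define h where "h = (\<lambda>x. cnj (R x) * gw d3 x)"
  define H where "H = (\<lambda>\<xi>1 \<xi>2. m (\<xi>1, \<xi>2) * A \<xi>1 * B \<xi>2)"
  define Aa where "Aa = (\<lambda>\<xi>. \<bar>C\<bar> * (\<Sum>k\<in>K1. norm (a k) * (exp (norm \<xi>) * ker d1 (\<xi> - k))))"
  define Bb where "Bb = (\<lambda>\<xi>. \<Sum>k\<in>K2. norm (b k) * (exp (norm \<xi>) * ker d2 (\<xi> - k)))"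
  have contA: "continuous_on UNIV A" unfolding A_def
    by (intro continuous_intros continuous_on_compose2[OF continuous_ker]) auto
  have contB: "continuous_on UNIV B" unfolding B_def
    by (intro continuous_intros continuous_on_compose2[OF continuous_ker]) auto
  have Hm: "(\<lambda>\<xi>::((real^2)\<times>(real^2)). H (fst \<xi>) (snd \<xi>)) \<in> borel_measurable borel"
  proof -
    have "(\<lambda>\<xi>::((real^2)\<times>(real^2)). A (fst \<xi>)) \<in> borel_measurable borel"
      by (intro borel_measurable_continuous_onI continuous_on_compose2[OF contA] continuous_intros) auto
    moreover have "(\<lambda>\<xi>::((real^2)\<times>(real^2)). B (snd \<xi>)) \<in> borel_measurable borel"
      by (intro borel_measurable_continuous_onI continuous_on_compose2[OF contB] continuous_intros) auto
    ultimately show ?thesis unfolding H_def using mm by (simp add: borel_measurable_times)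
  qed
  have Hb: "norm (H \<xi>1 \<xi>2) \<le> Aa \<xi>1 * Bb \<xi>2" for \<xi>1 \<xi>2
  proof -
    have nA: "norm (A \<xi>1) \<le> (\<Sum>k\<in>K1. norm (a k) * ker d1 (\<xi>1 - k))"
      unfolding A_def using ker_nonneg[OF d1]
      by (intro order_trans[OF norm_sum] sum_mono) (simp add: norm_mult)
    have nB: "norm (B \<xi>2) \<le> (\<Sum>k\<in>K2. norm (b k) * ker d2 (\<xi>2 - k))"
      unfolding B_def using ker_nonneg[OF d2]
      by (intro order_trans[OF norm_sum] sum_mono) (simp add: norm_mult)
    have nm: "norm (m (\<xi>1, \<xi>2)) \<le> \<bar>C\<bar> * (exp (norm \<xi>1) * exp (norm \<xi>2))"
    proof -
      have f1: "\<bar>C\<bar> * exp (norm (\<xi>1, \<xi>2)) \<le> \<bar>C\<bar> * exp (norm \<xi>1 + norm \<xi>2)"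
        using norm_Pair_le[of \<xi>1 \<xi>2] by (intro mult_left_mono) auto
      have f2: "C * exp (norm (\<xi>1, \<xi>2)) \<le> \<bar>C\<bar> * exp (norm (\<xi>1, \<xi>2))" by (rule mult_right_mono) auto
      have "norm (m (\<xi>1, \<xi>2)) \<le> \<bar>C\<bar> * exp (norm \<xi>1 + norm \<xi>2)"
        using mb[of "(\<xi>1, \<xi>2)"] f1 f2 by linarith
      then show ?thesis by (simp only: exp_add)
    qed
    have "norm (H \<xi>1 \<xi>2) = norm (m (\<xi>1, \<xi>2)) * norm (A \<xi>1) * norm (B \<xi>2)"
      unfolding H_def by (simp add: norm_mult)
    also have "\<dots> \<le> (\<bar>C\<bar> * (exp (norm \<xi>1) * exp (norm \<xi>2))) * (\<Sum>k\<in>K1. norm (a k) * ker d1 (\<xi>1 - k)) * (\<Sum>k\<in>K2. norm (b k) * ker d2 (\<xi>2 - k))"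
      by (intro mult_mono nm nA nB) (auto intro!: sum_nonneg mult_nonneg_nonneg ker_nonneg d1 d2)
    also have "\<dots> = Aa \<xi>1 * Bb \<xi>2"
      unfolding Aa_def Bb_def by (simp add: sum_distrib_left sum_distrib_right mult_ac)
    finally show ?thesis .
  qed
  have iAa: "integrable lborel Aa"
    unfolding Aa_def using expker_integrable[OF d1] by auto
  have iBb: "integrable lborel Bb"
    unfolding Bb_def using expker_integrable[OF d2] by auto
  have hsum: "h x = (\<Sum>k\<in>K3. cnj (c k) * (gw d3 x * echar (- (x \<bullet> k))))" for x
    unfolding h_def Rd by (simp add: echar_minus sum_distrib_left mult_ac inner_commute)
  have ih: "integrable lborel h"
    unfolding hsum using FT2(1)[OF d3] by auto
  note F = FUB[OF Hm Hb iAa iBb ih]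
  have L1: "(LINT x|lborel. bilin_mult m (\<lambda>y. P y * gw d1 y) (\<lambda>y. Q y * gw d2 y) x * cnj (R x) * gw d3 x)
      = (LINT x|lborel. (LINT \<xi>1|lborel. LINT \<xi>2|lborel. H \<xi>1 \<xi>2 * echar ((\<xi>1 + \<xi>2) \<bullet> x)) * h x)"
    unfolding bilin_mult_def fA fB H_def h_def by (simp add: mult.assoc)
  have inner: "(LINT x|lborel. echar (s \<bullet> x) * h x) = (\<Sum>k\<in>K3. cnj (c k) * complex_of_real (ker d3 (k - s)))" for s
  proof -
    have e: "echar (s \<bullet> x) * h x = (\<Sum>k\<in>K3. cnj (c k) * (gw d3 x * echar (- (x \<bullet> (k - s)))))" for x
    proof -
      have "echar (s \<bullet> x) * echar (- (x \<bullet> k)) = echar (- (x \<bullet> (k - s)))" for k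
        by (simp add: echar_add[symmetric] inner_diff_right inner_commute)
      moreover have "echar (s \<bullet> x) * h x = (\<Sum>k\<in>K3. cnj (c k) * (gw d3 x * (echar (s \<bullet> x) * echar (- (x \<bullet> k)))))"
        unfolding hsum sum_distrib_left by (simp add: mult_ac)
      ultimately show ?thesis by simp
    qed
    show ?thesis unfolding e using FT2[OF d3] by (subst Bochner_Integration.integral_sum) auto
  qed
  have pw: "H (fst \<xi>) (snd \<xi>) * (LINT x|lborel. echar ((fst \<xi> + snd \<xi>) \<bullet> x) * h x)
      = (\<Sum>n1\<in>K1. \<Sum>n2\<in>K2. \<Sum>k3\<in>K3. a n1 * b n2 * cnj (c k3) *
          (m \<xi> * complex_of_real (ker d1 (fst \<xi> - n1) * ker d2 (snd \<xi> - n2) * ker d3 (k3 - (fst \<xi> + snd \<xi>)))))" for \<xi>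
  proof -
    have "H (fst \<xi>) (snd \<xi>) * (LINT x|lborel. echar ((fst \<xi> + snd \<xi>) \<bullet> x) * h x)
        = m \<xi> * (A (fst \<xi>) * B (snd \<xi>) * (\<Sum>k\<in>K3. cnj (c k) * complex_of_real (ker d3 (k - (fst \<xi> + snd \<xi>)))))"
      unfolding H_def inner by (simp add: mult_ac)
    also have "\<dots> = m \<xi> * (\<Sum>n1\<in>K1. \<Sum>n2\<in>K2. \<Sum>k3\<in>K3. (a n1 * complex_of_real (ker d1 (fst \<xi> - n1))) * (b n2 * complex_of_real (ker d2 (snd \<xi> - n2))) * (cnj (c k3) * complex_of_real (ker d3 (k3 - (fst \<xi> + snd \<xi>)))))"
      unfolding A_def B_def sum3 sum3p by (simp only: prod.case)
    also have "\<dots> = (\<Sum>n1\<in>K1. \<Sum>n2\<in>K2. \<Sum>k3\<in>K3. a n1 * b n2 * cnj (c k3) *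
          (m \<xi> * complex_of_real (ker d1 (fst \<xi> - n1) * ker d2 (snd \<xi> - n2) * ker d3 (k3 - (fst \<xi> + snd \<xi>)))))"
      by (simp add: sum_distrib_left mult_ac)
    finally show ?thesis .
  qed
  have tint: "integrable lborel (\<lambda>\<xi>. m \<xi> * complex_of_real (ker d1 (fst \<xi> - n1) * ker d2 (snd \<xi> - n2) * ker d3 (k3 - (fst \<xi> + snd \<xi>))))" for n1 n2 k3
    by (rule TERMINT[OF mm mb d1 d2 d3])
  have "(LINT x|lborel. bilin_mult m (\<lambda>y. P y * gw d1 y) (\<lambda>y. Q y * gw d2 y) x * cnj (R x) * gw d3 x)
      = (LINT \<xi>|lborel. (\<Sum>n1\<in>K1. \<Sum>n2\<in>K2. \<Sum>k3\<in>K3. a n1 * b n2 * cnj (c k3) *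
          (m \<xi> * complex_of_real (ker d1 (fst \<xi> - n1) * ker d2 (snd \<xi> - n2) * ker d3 (k3 - (fst \<xi> + snd \<xi>))))))"
    unfolding L1 F(2) pw ..
  also have "\<dots> = (\<Sum>n1\<in>K1. \<Sum>n2\<in>K2. \<Sum>k3\<in>K3. a n1 * b n2 * cnj (c k3) *
        (LINT \<xi>|lborel. m \<xi> * complex_of_real (ker d1 (fst \<xi> - n1) * ker d2 (snd \<xi> - n2) * ker d3 (k3 - (fst \<xi> + snd \<xi>)))))"
    using tint by (simp add: integral_mult_right_zero)
  finally show ?thesis .
qed

theorem lemma3p4:
  fixes P Q R :: "real^2 \<Rightarrow> complex"
    and m :: "(real^2) \<times> (real^2) \<Rightarrow> complex"
    and \<alpha> \<beta> \<gamma> :: real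
  assumes "trig_poly P" and "trig_poly Q" and "trig_poly R"
    and "m \<in> borel_measurable borel"
    and "\<And>k1 k2. k1 \<in> Zsq \<Longrightarrow> k2 \<in> Zsq \<Longrightarrow> isCont m (k1, k2)"
    and "\<exists>C. \<forall>\<xi>1 \<xi>2. norm (m (\<xi>1, \<xi>2)) \<le> C * exp (norm (\<xi>1, \<xi>2))"
    and "\<alpha> > 0" and "\<beta> > 0" and "\<gamma> > 0" and "\<alpha> + \<beta> + \<gamma> = 1"
  shows "((\<lambda>\<epsilon>. complex_of_real \<epsilon> *
            (LINT x|lborel. bilin_mult m (\<lambda>y. P y * gw (\<alpha> * \<epsilon>) y) (\<lambda>y. Q y * gw (\<beta> * \<epsilon>) y) x
                            * cnj (R x) * gw (\<gamma> * \<epsilon>) x))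
          \<longlongrightarrow> (LINT x:cbox (vec (-1/2)) (vec (1/2))|lborel. periodization m P Q x * cnj (R x)))
         (at_right 0)"
proof -
  note mm = assms(4)
  have a: "\<alpha> > 0" and b: "\<beta> > 0" and g: "\<gamma> > 0" and s: "\<alpha> + \<beta> + \<gamma> = 1" using assms(7-10) by auto
  from assms(1) obtain K1 and a :: "real^2 \<Rightarrow> complex" where K1: "finite K1" "K1 \<subseteq> Zsq"
    and Pd: "\<And>x. P x = (\<Sum>k\<in>K1. a k * echar (k \<bullet> x))" unfolding trig_poly_def by blast
  from assms(2) obtain K2 and b :: "real^2 \<Rightarrow> complex" where K2: "finite K2" "K2 \<subseteq> Zsq"
    and Qd: "\<And>x. Q x = (\<Sum>k\<in>K2. b k * echar (k \<bullet> x))" unfolding trig_poly_def by blast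
  from assms(3) obtain K3 and c :: "real^2 \<Rightarrow> complex" where K3: "finite K3" "K3 \<subseteq> Zsq"
    and Rd: "\<And>x. R x = (\<Sum>k\<in>K3. c k * echar (k \<bullet> x))" unfolding trig_poly_def by blast
  from assms(6) obtain C where Cb: "\<And>\<xi>1 \<xi>2. norm (m (\<xi>1, \<xi>2)) \<le> C * exp (norm (\<xi>1, \<xi>2))" by blast
  have mb: "norm (m p) \<le> C * exp (norm p)" for p
    using Cb[of "fst p" "snd p"] by simp
  let ?J = "\<lambda>\<epsilon> n1 n2 k3. LINT \<xi>|lborel. m \<xi> * complex_of_real (ker (\<alpha>*\<epsilon>) (fst \<xi> - n1) * ker (\<beta>*\<epsilon>) (snd \<xi> - n2) * ker (\<gamma>*\<epsilon>) (k3 - (fst \<xi> + snd \<xi>)))"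
  have RH: "(LINT x:cbox (vec (-1/2)) (vec (1/2))|lborel. periodization m P Q x * cnj (R x))
       = (\<Sum>n1\<in>K1. \<Sum>n2\<in>K2. \<Sum>k3\<in>K3. a n1 * b n2 * cnj (c k3) * (if k3 = n1 + n2 then m (n1,n2) else 0))"
    by (rule RHS[OF K1 K2 K3 Pd Qd Rd])
  have CT: "((\<lambda>\<epsilon>. complex_of_real \<epsilon> * ?J \<epsilon> n1 n2 k3) \<longlongrightarrow> (if k3 = n1 + n2 then m (n1, n2) else 0)) (at_right 0)"
    if "n1 \<in> K1" "n2 \<in> K2" for n1 n2 k3
    using that K1 K2 by (intro CLAIMT[OF mm assms(5) mb a b g s]) auto
  have lim: "((\<lambda>\<epsilon>. \<Sum>n1\<in>K1. \<Sum>n2\<in>K2. \<Sum>k3\<in>K3. a n1 * b n2 * cnj (c k3) * (complex_of_real \<epsilon> * ?J \<epsilon> n1 n2 k3))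
      \<longlongrightarrow> (\<Sum>n1\<in>K1. \<Sum>n2\<in>K2. \<Sum>k3\<in>K3. a n1 * b n2 * cnj (c k3) * (if k3 = n1 + n2 then m (n1,n2) else 0))) (at_right 0)"
    by (intro tendsto_sum tendsto_mult_left CT)
  have ev: "\<forall>\<^sub>F \<epsilon> in at_right 0. (\<Sum>n1\<in>K1. \<Sum>n2\<in>K2. \<Sum>k3\<in>K3. a n1 * b n2 * cnj (c k3) * (complex_of_real \<epsilon> * ?J \<epsilon> n1 n2 k3))
      = complex_of_real \<epsilon> *
            (LINT x|lborel. bilin_mult m (\<lambda>y. P y * gw (\<alpha> * \<epsilon>) y) (\<lambda>y. Q y * gw (\<beta> * \<epsilon>) y) x
                            * cnj (R x) * gw (\<gamma> * \<epsilon>) x)"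
    using eventually_at_right_less[of "0::real"]
  proof eventually_elim
    case (elim \<epsilon>)
    have "(LINT x|lborel. bilin_mult m (\<lambda>y. P y * gw (\<alpha> * \<epsilon>) y) (\<lambda>y. Q y * gw (\<beta> * \<epsilon>) y) x * cnj (R x) * gw (\<gamma> * \<epsilon>) x)
      = (\<Sum>n1\<in>K1. \<Sum>n2\<in>K2. \<Sum>k3\<in>K3. a n1 * b n2 * cnj (c k3) * ?J \<epsilon> n1 n2 k3)"
      by (rule LHSEQ[OF K1(1) K2(1) K3(1) Pd Qd Rd mm mb]) (use a b g elim in auto)
    then show ?case by (simp add: sum_distrib_left mult_ac)
  qed
  show ?thesis
    unfolding RH using iffD1[OF tendsto_cong[OF ev] lim] .
qed

end
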